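(* Let $\mathcal{D}$ be a distribution on $\mathbb{R}^d\times\mathbb{R}$ such that, for $(\mathbf{x},y)\sim\mathcal{D}$, $\|\mathbf{x}\|_\infty\le1$ and $|y|\le B$ with probability $1$, and suppose the second moments $\mathbb{E}_{\mathcal{D}}[x_i^2]$, $i\in[d]$, are known. Let $\bar{\mathbf{w}}$ be the output of DDAELR on $m$ i.i.d. examples with budget $k$, run with $\eta=\frac{1}{2B}\sqrt{\frac{\log 2d}{5m\left(\frac1k\|\mathbb{E}_{\mathcal{D}}[\mathbf{x}^2]\|_1+1\right)}}$. If $m\ge\log 2d$, then for every $\mathbf{w}^*\in\mathbb{R}^d$ with $\|\mathbf{w}^*\|_1\le B$, $$\mathbb{E}_{\mathcal{D},A}\big[L_{\mathcal{D}}(\bar{\mathbf{w}})\big]\le L_{\mathcal{D}}(\mathbf{w}^* )+4B^2\sqrt{\frac{5\log 2d\left(\frac1k\|\mathbb{E}_{\mathcal{D}}[\mathbf{x}^2]\|_1+1\right)}{m}}.$$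
   Context: Loss $\ell(\mathbf{w};\mathbf{x},y)=\frac12(\langle\mathbf{w},\mathbf{x}\rangle-y)^2$; risk $L_{\mathcal{D}}(\mathbf{w})=\mathbb{E}_{(\mathbf{x},y)\sim\mathcal{D}}[\ell]$. $\mathbb{E}_{\mathcal{D}}[\mathbf{x}^2]$ is the vector of second moments $\mathbb{E}_{\mathcal{D}}[x_i^2]$. $\mathrm{clip}(x,c)=\max\{\min\{x,c\},-c\}$. Algorithm GAELR (parameters $B,\eta>0$, probabilities $q_i$ summing to $1$, budget $k$; examples $(\mathbf{x}_t,y_t)$, $t=1..m$): $\mathbf{z}_1^\pm=\mathbf{1}_d$. For each $t$: $\mathbf{w}_t=(\mathbf{z}_t^+-\mathbf{z}_t^-)B/(\|\mathbf{z}_t^+\|_1+\|\mathbf{z}_t^-\|_1)$; for $r=1..k$ draw $i_{t,r}$ with probability $q_{i_{t,r}}$, $\widetilde{\mathbf{x}}_{t,r}=\frac{1}{q_{i_{t,r}}}\mathbf{x}_t[i_{t,r}]\mathbf{e}_{i_{t,r}}$; $\widetilde{\mathbf{x}}_t=\frac1k\sum_r\widetilde{\mathbf{x}}_{t,r}$; draw $j_t$ with probability $p_j=|w_{t,j}|/\|\mathbf{w}_t\|_1$, $\widetilde\phi_t=\frac{w_{t,j_t}}{p_{j_t}}\mathbf{x}_t[j_t]-y_t$; $\widetilde{\mathbf{g}}_t=\widetilde\phi_t\widetilde{\mathbf{x}}_t$; $\bar{\mathbf{g}}_t[i]=\mathrm{clip}(\widetilde{\mathbf{g}}_t[i],1/\eta)$;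 $\mathbf{z}_{t+1}^+[i]=\mathbf{z}_t^+[i]e^{-\eta\bar{\mathbf{g}}_t[i]}$, $\mathbf{z}_{t+1}^-[i]=\mathbf{z}_t^-[i]e^{\eta\bar{\mathbf{g}}_t[i]}$. Output $\frac1m\sum_t\mathbf{w}_t$. DDAELR is GAELR with $q_i=\mathbb{E}_{\mathcal{D}}[x_i^2]/\sum_{j=1}^d\mathbb{E}_{\mathcal{D}}[x_j^2]$. $\mathbb{E}_{\mathcal{D},A}$ is expectation over examples and algorithm randomness. *)

theory Defs
  imports "HOL-Probability.Probability"
begin

type_synonym 'n st3 = "(real ^ 'n) \<times> (real ^ 'n) \<times> (real ^ 'n)"

text \<open>Vectors in R^d are rendered as \<open>real ^ 'n\<close> with d = CARD('n).
  An example is a pair (x, y) :: (real ^ 'n) \<times> real.\<close>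

definition sq_loss :: "real ^ 'n \<Rightarrow> real ^ 'n \<Rightarrow> real \<Rightarrow> real" where
  "sq_loss w x y = (1/2) * (w \<bullet> x - y)^2"

definition risk :: "((real ^ 'n) \<times> real) measure \<Rightarrow> real ^ 'n \<Rightarrow> real" where
  "risk D w = (\<integral>p. sq_loss w (fst p) (snd p) \<partial>D)"

definition l1norm :: "real ^ 'n \<Rightarrow> real" where
  "l1norm v = (\<Sum>i\<in>UNIV. \<bar>v $ i\<bar>)"

definition linfnorm :: "real ^ 'n \<Rightarrow> real" where
  "linfnorm v = Max (range (\<lambda>i. \<bar>v $ i\<bar>))"

definition clip :: "real \<Rightarrow> real \<Rightarrow> real" where
  "clip x c = max (min x c) (- c)"

definition second_moments :: "((real ^ 'n) \<times> real) measure \<Rightarrow> real ^ 'n" where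
  "second_moments D = (\<chi> i. \<integral>p. (fst p $ i)^2 \<partial>D)"

fun sum_draws :: "'n::finite pmf \<Rightarrow> real ^ 'n \<Rightarrow> nat \<Rightarrow> (real ^ 'n) pmf" where
  "sum_draws q x 0 = return_pmf 0"
| "sum_draws q x (Suc r) =
     do { i \<leftarrow> q; s \<leftarrow> sum_draws q x r;
          return_pmf (s + (x $ i / pmf q i) *\<^sub>R axis i 1) }"

definition xtilde_pmf :: "'n::finite pmf \<Rightarrow> nat \<Rightarrow> real ^ 'n \<Rightarrow> (real ^ 'n) pmf" where
  "xtilde_pmf q k x = map_pmf (\<lambda>s. (1 / real k) *\<^sub>R s) (sum_draws q x k)"

text \<open>Distribution p_j = |w_j| / ||w||_1 (irrelevant, taken uniform, when w = 0).\<close>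
definition wdist :: "real ^ 'n::finite \<Rightarrow> 'n pmf" where
  "wdist w = (if w = 0 then pmf_of_set UNIV
              else embed_pmf (\<lambda>j. \<bar>w $ j\<bar> / l1norm w))"

text \<open>phi = (w_j / p_j) x[j] - y; for p_j > 0 we have w_j / p_j = sgn(w_j) ||w||_1.\<close>
definition phi_pmf :: "real ^ 'n::finite \<Rightarrow> real ^ 'n \<Rightarrow> real \<Rightarrow> real pmf" where
  "phi_pmf w x y = map_pmf (\<lambda>j. sgn (w $ j) * l1norm w * x $ j - y) (wdist w)"

definition weight :: "real \<Rightarrow> real ^ 'n \<Rightarrow> real ^ 'n \<Rightarrow> real ^ 'n" where
  "weight B zp zm = (B / (l1norm zp + l1norm zm)) *\<^sub>R (zp - zm)"

text \<open>One round of GAELR; state = (z+, z-, sum of the w_t so far).\<close>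
definition gaelr_step ::
  "real \<Rightarrow> real \<Rightarrow> 'n::finite pmf \<Rightarrow> nat \<Rightarrow> (real ^ 'n) \<times> real
   \<Rightarrow> 'n st3 \<Rightarrow> ('n st3) pmf" where
  "gaelr_step B \<eta> q k ex st =
     (case st of (zp, zm, acc) \<Rightarrow>
      (let w = weight B zp zm in
       do { xt \<leftarrow> xtilde_pmf q k (fst ex);
            ph \<leftarrow> phi_pmf w (fst ex) (snd ex);
            let g = ph *\<^sub>R xt;
            let gb = (\<chi> i. clip (g $ i) (1 / \<eta>));
            return_pmf ((\<chi> i. zp $ i * exp (- \<eta> * gb $ i)),
                        (\<chi> i. zm $ i * exp (\<eta> * gb $ i)),
                        acc + w) }))"

fun gaelr_run ::
  "real \<Rightarrow> real \<Rightarrow> 'n::finite pmf \<Rightarrow> nat \<Rightarrow> (nat \<Rightarrow> (real ^ 'n) \<times> real) \<Rightarrow> nat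
   \<Rightarrow> ('n st3) pmf" where
  "gaelr_run B \<eta> q k S 0 = return_pmf (\<chi> i. 1, \<chi> i. 1, 0)"
| "gaelr_run B \<eta> q k S (Suc t) = gaelr_run B \<eta> q k S t \<bind> gaelr_step B \<eta> q k (S t)"

definition GAELR ::
  "real \<Rightarrow> real \<Rightarrow> 'n::finite pmf \<Rightarrow> nat \<Rightarrow> nat \<Rightarrow> (nat \<Rightarrow> (real ^ 'n) \<times> real) \<Rightarrow> (real ^ 'n) pmf" where
  "GAELR B \<eta> q k m S = map_pmf (\<lambda>(zp, zm, acc). (1 / real m) *\<^sub>R acc) (gaelr_run B \<eta> q k S m)"

definition ddaelr_q :: "((real ^ 'n::finite) \<times> real) measure \<Rightarrow> 'n pmf" where
  "ddaelr_q D = embed_pmf (\<lambda>i. second_moments D $ i / l1norm (second_moments D))"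

definition DDAELR ::
  "((real ^ 'n::finite) \<times> real) measure \<Rightarrow> real \<Rightarrow> real \<Rightarrow> nat \<Rightarrow> nat \<Rightarrow> (nat \<Rightarrow> (real ^ 'n) \<times> real) \<Rightarrow> (real ^ 'n) pmf" where
  "DDAELR D B \<eta> k m S = GAELR B \<eta> (ddaelr_q D) k m S"

end

theory Submission
  imports Defs
begin

lemma E_bind:
  fixes h :: "'b \<Rightarrow> real"
  assumes "finite (set_pmf p)" "\<And>a. a \<in> set_pmf p \<Longrightarrow> finite (set_pmf (f a))"
  shows "measure_pmf.expectation (p \<bind> f) h =
         measure_pmf.expectation p (\<lambda>a. measure_pmf.expectation (f a) h)"
proof -
  have "measure_pmf.expectation (p \<bind> f) h =
           (\<Sum>a\<in>set_pmf p. pmf p a *\<^sub>R measure_pmf.expectation (f a) h)"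
    using assms by (intro pmf_expectation_bind) auto
  also have "\<dots> = measure_pmf.expectation p (\<lambda>a. measure_pmf.expectation (f a) h)"
    using assms by (subst integral_measure_pmf[of "set_pmf p"]) auto
  finally show ?thesis .
qed

lemma E_finite_type:
  fixes q :: "'n::finite pmf" and f :: "'n \<Rightarrow> real"
  shows "measure_pmf.expectation q f = (\<Sum>i\<in>UNIV. pmf q i * f i)"
  by (subst integral_measure_pmf[of UNIV]) auto

lemma finite_sum_draws: "finite (set_pmf (sum_draws q x r))"
  by (induction r) auto

lemma E_sum_draws_Suc:
  fixes h :: "real ^ 'n::finite \<Rightarrow> real"
  shows "measure_pmf.expectation (sum_draws q x (Suc r)) h =
    (\<Sum>j\<in>UNIV. pmf q j * measure_pmf.expectation (sum_draws q x r)
        (\<lambda>s. h (s + (x $ j / pmf q j) *\<^sub>R axis j 1)))"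
  by (simp add: E_bind finite_sum_draws E_finite_type)

lemma axis_nth_eq: "(axis j (1::real)) $ i = (if i = j then 1 else 0)"
  by (simp add: axis_def)

lemma sum_if_delta:
  fixes f a :: "'n::finite \<Rightarrow> real"
  shows "(\<Sum>j\<in>UNIV. f j * (if i = j then a j else 0)) = f i * a i"
proof -
  have "(\<Sum>j\<in>UNIV. f j * (if i = j then a j else 0)) = (\<Sum>j\<in>UNIV. if j = i then f j * a j else 0)"
    by (rule sum.cong) auto
  then show ?thesis by simp
qed

lemma E_sum_draws_1:
  fixes q :: "'n::finite pmf"
  shows "measure_pmf.expectation (sum_draws q x r) (\<lambda>s. s $ i) =
         real r * (pmf q i * (x $ i / pmf q i))"
proof (induction r)
  case 0 then show ?case by simp
next
  case (Suc r)
  have "measure_pmf.expectation (sum_draws q x (Suc r)) (\<lambda>s. s $ i) =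
     (\<Sum>j\<in>UNIV. pmf q j * (measure_pmf.expectation (sum_draws q x r) (\<lambda>s. s $ i)
          + (if i = j then x $ j / pmf q j else 0)))"
    unfolding E_sum_draws_Suc
    by (intro sum.cong refl arg_cong2[where f="(*)"])
       (auto simp: axis_nth_eq integrable_measure_pmf_finite finite_sum_draws)
  also have "\<dots> = (\<Sum>j\<in>UNIV. pmf q j * measure_pmf.expectation (sum_draws q x r) (\<lambda>s. s $ i))
       + (\<Sum>j\<in>UNIV. pmf q j * (if i = j then x $ j / pmf q j else 0))"
    by (simp add: distrib_left sum.distrib)
  also have "\<dots> = measure_pmf.expectation (sum_draws q x r) (\<lambda>s. s $ i) + pmf q i * (x $ i / pmf q i)"
    by (simp add: sum_distrib_right[symmetric] sum_if_delta sum_pmf_eq_1)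
  finally show ?case using Suc by (simp add: algebra_simps)
qed

lemma E_sum_draws_2:
  fixes q :: "'n::finite pmf"
  shows "measure_pmf.expectation (sum_draws q x r) (\<lambda>s. (s $ i)^2) =
         real r * (pmf q i * (x $ i / pmf q i)^2) + real r * (real r - 1) * (pmf q i * (x $ i / pmf q i))^2"
proof (induction r)
  case 0 then show ?case by simp
next
  case (Suc r)
  define E1 where "E1 = measure_pmf.expectation (sum_draws q x r) (\<lambda>s. s $ i)"
  define E2 where "E2 = measure_pmf.expectation (sum_draws q x r) (\<lambda>s. (s $ i)^2)"
  define c where "c j = (if i = j then x $ j / pmf q j else 0)" for j
  have "measure_pmf.expectation (sum_draws q x (Suc r)) (\<lambda>s. (s $ i)^2) =
     (\<Sum>j\<in>UNIV. pmf q j * measure_pmf.expectation (sum_draws q x r) (\<lambda>s. (s $ i)^2 + 2 * c j * s $ i + (c j)^2))"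
    unfolding E_sum_draws_Suc
    by (intro sum.cong refl arg_cong2[where f="(*)"] Bochner_Integration.integral_cong)
       (auto simp: axis_nth_eq c_def power2_eq_square algebra_simps)
  also have "\<dots> = (\<Sum>j\<in>UNIV. pmf q j * (E2 + 2 * c j * E1 + (c j)^2))"
    by (intro sum.cong refl arg_cong2[where f="(*)"])
       (simp add: E1_def E2_def integrable_measure_pmf_finite finite_sum_draws)
  also have "\<dots> = E2 * (\<Sum>j\<in>UNIV. pmf q j) + 2 * E1 * (\<Sum>j\<in>UNIV. pmf q j * c j) + (\<Sum>j\<in>UNIV. pmf q j * (c j)^2)"
    by (simp add: algebra_simps sum.distrib sum_distrib_left sum_distrib_right)
  also have "(\<Sum>j\<in>UNIV. pmf q j * c j) = pmf q i * (x $ i / pmf q i)"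
    unfolding c_def by (rule sum_if_delta)
  also have "(\<Sum>j\<in>UNIV. pmf q j * (c j)^2) = pmf q i * (x $ i / pmf q i)^2"
  proof -
    have "(\<Sum>j\<in>UNIV. pmf q j * (c j)^2) = (\<Sum>j\<in>UNIV. pmf q j * (if i = j then (x $ j / pmf q j)^2 else 0))"
      by (rule sum.cong) (auto simp: c_def)
    then show ?thesis by (simp add: sum_if_delta)
  qed
  also have "(\<Sum>j\<in>UNIV. pmf q j) = 1"
    using sum_pmf_eq_1[of UNIV q] by simp
  finally have eq: "measure_pmf.expectation (sum_draws q x (Suc r)) (\<lambda>s. (s $ i)^2) =
     E2 * 1 + 2 * E1 * (pmf q i * (x $ i / pmf q i)) + pmf q i * (x $ i / pmf q i)^2" .
  define a where "a = pmf q i * (x $ i / pmf q i)^2"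
  define b where "b = pmf q i * (x $ i / pmf q i)"
  have E1: "E1 = real r * b" unfolding E1_def b_def by (rule E_sum_draws_1)
  have E2: "E2 = real r * a + real r * (real r - 1) * b^2" unfolding E2_def a_def b_def by (rule Suc)
  have "E2 * 1 + 2 * E1 * b + a = real (Suc r) * a + real (Suc r) * (real (Suc r) - 1) * b^2"
    unfolding E1 E2 by (simp add: algebra_simps power2_eq_square)
  then show ?case using eq unfolding a_def b_def by simp
qed


lemma pmf_embed_finite:
  fixes f :: "'n::finite \<Rightarrow> real"
  assumes "\<And>x. 0 \<le> f x" "(\<Sum>x\<in>UNIV. f x) = 1"
  shows "pmf (embed_pmf f) x = f x"
proof (rule pmf_embed_pmf)
  show "\<And>x. 0 \<le> f x" by fact
  have "(\<integral>\<^sup>+x. ennreal (f x) \<partial>count_space UNIV) = (\<Sum>x\<in>UNIV. ennreal (f x))"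
    by (simp add: nn_integral_count_space_finite)
  also have "\<dots> = ennreal (\<Sum>x\<in>UNIV. f x)"
    using assms(1) by (simp add: sum_ennreal)
  finally show "(\<integral>\<^sup>+x. ennreal (f x) \<partial>count_space UNIV) = 1" using assms(2) by simp
qed

lemma l1norm_nonneg: "0 \<le> l1norm v"
  unfolding l1norm_def by (simp add: sum_nonneg)

lemma l1norm_eq_0: "l1norm (v :: real ^ 'n::finite) = 0 \<longleftrightarrow> v = 0"
proof
  assume "l1norm v = 0"
  then have "\<forall>i\<in>UNIV. \<bar>v $ i\<bar> = 0"
    unfolding l1norm_def by (subst sum_nonneg_eq_0_iff[symmetric]) auto
  then show "v = 0" by (simp add: vec_eq_iff)
qed (simp add: l1norm_def)

lemma abs_le_l1norm: "\<bar>v $ i\<bar> \<le> l1norm (v :: real ^ 'n::finite)"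
  unfolding l1norm_def by (rule member_le_sum) auto

lemma abs_le_linfnorm: "\<bar>v $ i\<bar> \<le> linfnorm (v :: real ^ 'n::finite)"
  unfolding linfnorm_def by (rule Max_ge) auto

lemma pmf_wdist:
  "pmf (wdist w) j = (if w = 0 then 1 / real CARD('n) else \<bar>w $ j\<bar> / l1norm w)"
  for w :: "real ^ 'n::finite"
proof (cases "w = 0")
  case True then show ?thesis by (simp add: wdist_def)
next
  case False
  then have pos: "l1norm w > 0" using l1norm_nonneg[of w] l1norm_eq_0[of w] by linarith
  have "(\<Sum>x\<in>UNIV. \<bar>w $ x\<bar> / l1norm w) = 1"
    using pos by (simp add: sum_divide_distrib[symmetric] l1norm_def)
  then show ?thesis using False pos
    by (simp add: wdist_def pmf_embed_finite)
qed

lemma sum_pmf_UNIV: "(\<Sum>j\<in>UNIV. pmf (p :: 'n::finite pmf) j) = 1"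
  using sum_pmf_eq_1[of UNIV p] by simp

lemma E_phi:
  fixes w x :: "real ^ 'n::finite"
  shows "measure_pmf.expectation (phi_pmf w x y) (\<lambda>p. p) = w \<bullet> x - y"
proof -
  have "measure_pmf.expectation (phi_pmf w x y) (\<lambda>p. p) =
      (\<Sum>j\<in>UNIV. pmf (wdist w) j * (sgn (w $ j) * l1norm w * x $ j - y))"
    by (simp add: phi_pmf_def E_finite_type)
  also have "\<dots> = (\<Sum>j\<in>UNIV. pmf (wdist w) j * (sgn (w $ j) * l1norm w * x $ j)) - y"
    by (simp add: right_diff_distrib sum_subtractf sum_distrib_right[symmetric] sum_pmf_UNIV)
  also have "(\<Sum>j\<in>UNIV. pmf (wdist w) j * (sgn (w $ j) * l1norm w * x $ j)) = w \<bullet> x"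
  proof (cases "w = 0")
    case True then show ?thesis by simp
  next
    case False
    then have pos: "l1norm w > 0" using l1norm_nonneg[of w] l1norm_eq_0[of w] by linarith
    have "(\<Sum>j\<in>UNIV. pmf (wdist w) j * (sgn (w $ j) * l1norm w * x $ j)) =
          (\<Sum>j\<in>UNIV. w $ j * x $ j)"
      using False pos by (intro sum.cong refl) (simp add: pmf_wdist abs_mult_sgn mult.assoc[symmetric])
    then show ?thesis by (simp add: inner_vec_def)
  qed
  finally show ?thesis .
qed

lemma E_phi_general:
  fixes w x :: "real ^ 'n::finite"
  shows "measure_pmf.expectation (phi_pmf w x y) h =
     (\<Sum>j\<in>UNIV. pmf (wdist w) j * h (sgn (w $ j) * l1norm w * x $ j - y))"
  by (simp add: phi_pmf_def E_finite_type)

lemma phi_bound: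
  fixes w x :: "real ^ 'n::finite"
  assumes "linfnorm x \<le> 1" "\<bar>y\<bar> \<le> B"
  shows "\<bar>sgn (w $ j) * l1norm w * x $ j - y\<bar> \<le> l1norm w + B"
proof -
  have "\<bar>sgn (w $ j) * l1norm w * x $ j\<bar> \<le> l1norm w"
  proof -
    have "\<bar>sgn (w $ j)\<bar> \<le> 1" by (simp add: abs_sgn_eq)
    moreover have "\<bar>x $ j\<bar> \<le> 1" using abs_le_linfnorm[of x j] assms(1) by simp
    ultimately have "\<bar>sgn (w $ j)\<bar> * \<bar>x $ j\<bar> \<le> 1" by (simp add: mult_le_one)
    then have "l1norm w * (\<bar>sgn (w $ j)\<bar> * \<bar>x $ j\<bar>) \<le> l1norm w"
      using l1norm_nonneg[of w] by (simp add: mult_left_le)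
    then show ?thesis by (simp add: abs_mult l1norm_nonneg abs_of_nonneg mult_ac)
  qed
  then show ?thesis using assms(2) by linarith
qed

lemma E_phi_sq:
  fixes w x :: "real ^ 'n::finite"
  assumes "linfnorm x \<le> 1" "\<bar>y\<bar> \<le> B"
  shows "measure_pmf.expectation (phi_pmf w x y) (\<lambda>p. p^2) \<le> (l1norm w + B)^2"
proof -
  have "measure_pmf.expectation (phi_pmf w x y) (\<lambda>p. p^2) \<le>
        measure_pmf.expectation (phi_pmf w x y) (\<lambda>p. (l1norm w + B)^2)"
  proof (rule integral_mono_AE)
    show "integrable (measure_pmf (phi_pmf w x y)) (\<lambda>p. p^2)"
      by (rule integrable_measure_pmf_finite) (simp add: phi_pmf_def)
    show "integrable (measure_pmf (phi_pmf w x y)) (\<lambda>p. (l1norm w + B)^2)" by simp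
    show "AE p in measure_pmf (phi_pmf w x y). p^2 \<le> (l1norm w + B)^2"
      unfolding AE_measure_pmf_iff
    proof
      fix p assume "p \<in> set_pmf (phi_pmf w x y)"
      then obtain j where p: "p = sgn (w $ j) * l1norm w * x $ j - y"
        by (auto simp: phi_pmf_def)
      show "p^2 \<le> (l1norm w + B)^2"
        unfolding p using power_mono[OF phi_bound[OF assms, of w j] abs_ge_zero, of 2]
        by simp
    qed
  qed
  then show ?thesis by simp
qed

lemma finite_xtilde: "finite (set_pmf (xtilde_pmf q k x))"
  by (simp add: xtilde_pmf_def finite_sum_draws)

lemma finite_phi: "finite (set_pmf (phi_pmf w x y))"
  for w :: "real ^ 'n::finite"
  by (simp add: phi_pmf_def)

lemma E_xtilde_1:
  assumes "k \<ge> 1"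
  shows "measure_pmf.expectation (xtilde_pmf q k x) (\<lambda>s. s $ i) = pmf q i * (x $ i / pmf q i)"
  using assms by (simp add: xtilde_pmf_def E_sum_draws_1)

lemma E_xtilde_2:
  assumes "k \<ge> 1"
  shows "measure_pmf.expectation (xtilde_pmf q k x) (\<lambda>s. (s $ i)^2) =
     pmf q i * (x $ i / pmf q i)^2 / real k + (1 - 1 / real k) * (pmf q i * (x $ i / pmf q i))^2"
proof -
  have "measure_pmf.expectation (xtilde_pmf q k x) (\<lambda>s. (s $ i)^2) =
        measure_pmf.expectation (sum_draws q x k) (\<lambda>s. (s $ i)^2) / (real k)^2"
    by (simp add: xtilde_pmf_def power_mult_distrib power_divide)
  also have "\<dots> = pmf q i * (x $ i / pmf q i)^2 / real k + (1 - 1 / real k) * (pmf q i * (x $ i / pmf q i))^2"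
    unfolding E_sum_draws_2 using assms by (simp add: field_simps power2_eq_square)
  finally show ?thesis .
qed


lemma exp_le_quad:
  fixes a :: real
  assumes "\<bar>a\<bar> \<le> 1"
  shows "exp a \<le> 1 + a + a^2"
proof (cases "a \<ge> 0")
  case True then show ?thesis using exp_bound[of a] assms by simp
next
  case False
  define y where "y = - a"
  have y: "0 < y" "y \<le> 1" using False assms by (auto simp: y_def)
  have e: "1 + y + y^2 / 2 \<le> exp y" using exp_lower_Taylor_quadratic[of y] y by simp
  have p: "0 < 1 - y + y^2" using y by (simp add: add_nonneg_pos)
  have id: "(1 + y + y^2 / 2) * (1 - y + y^2) = 1 + (y^2 / 2 + y^3 / 2 + y^4 / 2)"
    by (simp add: field_simps power2_eq_square power3_eq_cube power4_eq_xxxx)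
  have "0 \<le> y^2 / 2 + y^3 / 2 + y^4 / 2" using y by simp
  then have "1 \<le> (1 + y + y^2 / 2) * (1 - y + y^2)" unfolding id by simp
  also have "\<dots> \<le> exp y * (1 - y + y^2)"
    using e p by (intro mult_right_mono) auto
  finally have "1 / exp y \<le> 1 - y + y^2"
    by (simp add: divide_le_eq mult.commute)
  then show ?thesis by (simp add: y_def exp_minus inverse_eq_divide)
qed

lemma l1norm_pos_vec:
  assumes "\<And>i. v $ i > 0"
  shows "l1norm v = (\<Sum>i\<in>UNIV. v $ i)"
  unfolding l1norm_def using assms by (intro sum.cong) (auto intro: abs_of_pos less_imp_le)

lemma potential_step:
  fixes zp zm g :: "real ^ 'n::finite"
  assumes eta: "\<eta> > 0" and B: "B > 0"
    and pos: "\<And>i. zp $ i > 0" "\<And>i. zm $ i > 0"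
    and gb: "\<And>i. \<bar>g $ i\<bar> \<le> 1 / \<eta>"
  shows "ln (l1norm (\<chi> i. zp $ i * exp (- \<eta> * g $ i)) + l1norm (\<chi> i. zm $ i * exp (\<eta> * g $ i)))
         - ln (l1norm zp + l1norm zm)
       \<le> - ((\<eta> / B) * (g \<bullet> weight B zp zm))
         + \<eta>^2 * (\<Sum>i\<in>UNIV. ((zp $ i + zm $ i) / (l1norm zp + l1norm zm)) * (g $ i)^2)"
proof -
  define W where "W = l1norm zp + l1norm zm"
  define W' where "W' = l1norm (\<chi> i. zp $ i * exp (- \<eta> * g $ i)) + l1norm (\<chi> i. zm $ i * exp (\<eta> * g $ i))"
  have W: "W = (\<Sum>i\<in>UNIV. zp $ i + zm $ i)"
    unfolding W_def using pos by (simp add: l1norm_pos_vec sum.distrib)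
  have Wpos: "W > 0" unfolding W by (intro sum_pos) (auto intro: add_pos_pos pos)
  have W': "W' = (\<Sum>i\<in>UNIV. zp $ i * exp (- \<eta> * g $ i) + zm $ i * exp (\<eta> * g $ i))"
    unfolding W'_def using pos by (subst l1norm_pos_vec, simp)+ (simp add: sum.distrib)
  have W'pos: "W' > 0" unfolding W' by (intro sum_pos) (auto intro!: add_pos_pos mult_pos_pos pos)
  have ab: "\<bar>\<eta> * g $ i\<bar> \<le> 1" for i
    using gb[of i] eta by (simp add: abs_mult field_simps)
  have "W' \<le> (\<Sum>i\<in>UNIV. zp $ i * (1 + (- \<eta> * g $ i) + (- \<eta> * g $ i)^2)
                      + zm $ i * (1 + (\<eta> * g $ i) + (\<eta> * g $ i)^2))"
    unfolding W'
    by (intro sum_mono add_mono mult_left_mono exp_le_quad) (use ab pos in \<open>auto intro: less_imp_le\<close>)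
  also have "\<dots> = W - \<eta> * (\<Sum>i\<in>UNIV. g $ i * (zp $ i - zm $ i)) + \<eta>^2 * (\<Sum>i\<in>UNIV. (zp $ i + zm $ i) * (g $ i)^2)"
    unfolding W by (simp add: algebra_simps power2_eq_square sum.distrib sum_distrib_left sum_subtractf)
  finally have Wle: "W' \<le> W - \<eta> * (\<Sum>i\<in>UNIV. g $ i * (zp $ i - zm $ i)) + \<eta>^2 * (\<Sum>i\<in>UNIV. (zp $ i + zm $ i) * (g $ i)^2)" .
  have gw: "(\<eta> / B) * (g \<bullet> weight B zp zm) = \<eta> * (\<Sum>i\<in>UNIV. g $ i * (zp $ i - zm $ i)) / W"
    using B unfolding weight_def W_def[symmetric]
    by (simp add: inner_vec_def sum_distrib_left sum_divide_distrib algebra_simps diff_divide_distrib)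
  have sq: "(\<Sum>i\<in>UNIV. ((zp $ i + zm $ i) / W) * (g $ i)^2) = (\<Sum>i\<in>UNIV. (zp $ i + zm $ i) * (g $ i)^2) / W"
    by (simp add: sum_divide_distrib)
  have "ln W' - ln W = ln (W' / W)" using Wpos W'pos by (simp add: ln_div)
  also have "\<dots> \<le> W' / W - 1" using Wpos W'pos by (intro ln_le_minus_one) simp
  also have "\<dots> \<le> (W - \<eta> * (\<Sum>i\<in>UNIV. g $ i * (zp $ i - zm $ i)) + \<eta>^2 * (\<Sum>i\<in>UNIV. (zp $ i + zm $ i) * (g $ i)^2)) / W - 1"
    using Wle Wpos by (simp add: divide_right_mono)
  also have "\<dots> = - ((\<eta> / B) * (g \<bullet> weight B zp zm)) + \<eta>^2 * (\<Sum>i\<in>UNIV. ((zp $ i + zm $ i) / W) * (g $ i)^2)"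
    unfolding gw sq using Wpos by (simp add: field_simps)
  finally show ?thesis unfolding W_def W'_def .
qed


lemma inner_le_l1:
  fixes w x :: "real ^ 'n::finite"
  shows "\<bar>w \<bullet> x\<bar> \<le> l1norm w * linfnorm x"
proof -
  have "\<bar>w \<bullet> x\<bar> \<le> (\<Sum>i\<in>UNIV. \<bar>w $ i\<bar> * \<bar>x $ i\<bar>)"
    unfolding inner_vec_def by (rule order_trans[OF sum_abs]) (simp add: abs_mult)
  also have "\<dots> \<le> (\<Sum>i\<in>UNIV. \<bar>w $ i\<bar> * linfnorm x)"
    by (intro sum_mono mult_left_mono abs_le_linfnorm) auto
  finally show ?thesis by (simp add: l1norm_def sum_distrib_right)
qed

locale setting =
  fixes D :: "((real ^ 'n::finite) \<times> real) measure" and B :: real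
  assumes P: "prob_space D" and sets_D: "sets D = sets borel"
    and bnd: "AE p in D. linfnorm (fst p) \<le> 1 \<and> \<bar>snd p\<bar> \<le> B"
    and Bpos: "B > 0"
begin

interpretation prob_space D by (rule P)

lemma meas_D_iff: "f \<in> borel_measurable D \<longleftrightarrow> f \<in> borel_measurable borel"
  for f :: "_ \<Rightarrow> real"
proof -
  have "measurable D (borel :: real measure) = measurable borel borel"
    by (rule measurable_cong_sets[OF sets_D refl])
  then show ?thesis by simp
qed

lemma sq_loss_meas: "(\<lambda>p. sq_loss w (fst p) (snd p)) \<in> borel_measurable D"
  unfolding meas_D_iff sq_loss_def borel_prod[symmetric] by measurable

lemma sq_loss_bound:
  assumes "linfnorm x \<le> 1" "\<bar>y\<bar> \<le> B"
  shows "\<bar>sq_loss w x y\<bar> \<le> (1/2) * (l1norm w + B)^2"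
proof -
  have "\<bar>w \<bullet> x\<bar> \<le> l1norm w"
    using inner_le_l1[of w x] assms(1) l1norm_nonneg[of w] by (meson mult_left_le order_trans)
  then have "\<bar>w \<bullet> x - y\<bar> \<le> l1norm w + B" using assms(2) by linarith
  then have "(w \<bullet> x - y)^2 \<le> (l1norm w + B)^2"
    using power_mono[OF _ abs_ge_zero, of _ _ 2] by fastforce
  then show ?thesis unfolding sq_loss_def by simp
qed

lemma sq_loss_int: "integrable D (\<lambda>p. sq_loss w (fst p) (snd p))"
proof (rule integrable_const_bound[where B="(1/2) * (l1norm w + B)^2"])
  show "AE p in D. norm (sq_loss w (fst p) (snd p)) \<le> (1/2) * (l1norm w + B)^2"
    using bnd
  proof eventually_elim
    fix p :: "(real ^ 'n) \<times> real" assume "linfnorm (fst p) \<le> 1 \<and> \<bar>snd p\<bar> \<le> B"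
    then show "norm (sq_loss w (fst p) (snd p)) \<le> (1/2) * (l1norm w + B)^2"
      using sq_loss_bound[of "fst p" "snd p" w] by (simp only: real_norm_def)
  qed
qed (rule sq_loss_meas)

lemma risk_nonneg: "0 \<le> risk D w"
  unfolding risk_def sq_loss_def by (intro integral_nonneg_AE) auto

lemma risk_le: "risk D w \<le> (1/2) * (l1norm w + B)^2"
proof -
  have "risk D w \<le> (\<integral>p. (1/2) * (l1norm w + B)^2 \<partial>D)"
    unfolding risk_def
  proof (intro integral_mono_AE sq_loss_int)
    show "AE p in D. sq_loss w (fst p) (snd p) \<le> (1/2) * (l1norm w + B)^2"
      using bnd
    proof eventually_elim
      fix p :: "(real ^ 'n) \<times> real" assume "linfnorm (fst p) \<le> 1 \<and> \<bar>snd p\<bar> \<le> B"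
      then show "sq_loss w (fst p) (snd p) \<le> (1/2) * (l1norm w + B)^2"
        using sq_loss_bound[of "fst p" "snd p" w] by (simp only: abs_le_iff)
    qed
  qed simp
  then show ?thesis by (simp add: prob_space)
qed

lemma risk_convex:
  assumes "0 \<le> a" "a \<le> 1"
  shows "risk D (a *\<^sub>R u + (1 - a) *\<^sub>R v) \<le> a * risk D u + (1 - a) * risk D v"
proof -
  have pt: "sq_loss (a *\<^sub>R u + (1 - a) *\<^sub>R v) x y \<le> a * sq_loss u x y + (1 - a) * sq_loss v x y" for x y
  proof -
    define s where "s = u \<bullet> x - y"
    define t where "t = v \<bullet> x - y"
    have e: "(a *\<^sub>R u + (1 - a) *\<^sub>R v) \<bullet> x - y = a * s + (1 - a) * t"
      by (simp add: s_def t_def inner_add_left algebra_simps)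
    have "a * s^2 + (1 - a) * t^2 - (a * s + (1 - a) * t)^2 = a * (1 - a) * (s - t)^2"
      by (simp add: algebra_simps power2_eq_square)
    moreover have "0 \<le> a * (1 - a) * (s - t)^2" using assms by simp
    ultimately show ?thesis unfolding sq_loss_def e s_def[symmetric] t_def[symmetric] by simp
  qed
  have "risk D (a *\<^sub>R u + (1 - a) *\<^sub>R v) \<le> (\<integral>p. a * sq_loss u (fst p) (snd p) + (1 - a) * sq_loss v (fst p) (snd p) \<partial>D)"
    unfolding risk_def by (intro integral_mono sq_loss_int pt Bochner_Integration.integrable_add integrable_mult_right)
  also have "\<dots> = a * risk D u + (1 - a) * risk D v"
    unfolding risk_def by (simp add: sq_loss_int)
  finally show ?thesis .
qed

lemma risk_continuous: "continuous_on UNIV (risk D)"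
proof (rule convex_on_continuous)
  show "convex_on UNIV (risk D)"
  proof (rule convex_onI)
    fix t :: real and x y :: "real ^ 'n" assume "0 < t" "t < 1"
    then show "risk D ((1 - t) *\<^sub>R x + t *\<^sub>R y) \<le> (1 - t) * risk D x + t * risk D y"
      using risk_convex[of "1 - t" x y] by simp
  qed simp
qed simp

lemma risk_meas[measurable]: "risk D \<in> borel_measurable borel"
  by (rule borel_measurable_continuous_onI[OF risk_continuous])

lemma loss_linear:
  fixes w ws x :: "real ^ 'n"
  shows "sq_loss w x y - sq_loss ws x y \<le> ((w \<bullet> x - y) *\<^sub>R x) \<bullet> (w - ws)"
proof -
  define s where "s = w \<bullet> x - y"
  define t where "t = ws \<bullet> x - y"
  have "((w \<bullet> x - y) *\<^sub>R x) \<bullet> (w - ws) = s * (s - t)"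
    by (simp add: s_def t_def inner_diff_right inner_commute)
  moreover have "(1/2) * s^2 - (1/2) * t^2 - s * (s - t) = - (1/2) * (s - t)^2"
    by (simp add: algebra_simps power2_eq_square)
  moreover have "0 \<le> (s - t)^2" by simp
  ultimately show ?thesis unfolding sq_loss_def s_def[symmetric] t_def[symmetric]
    by linarith
qed

end


lemma clip_abs: "0 \<le> c \<Longrightarrow> \<bar>clip x c\<bar> \<le> c"
  unfolding clip_def by auto

lemma clip_sq: "0 \<le> c \<Longrightarrow> (clip x c)^2 \<le> x^2"
  unfolding clip_def
  by (cases "x \<ge> 0") (auto simp: max_def min_def abs_le_square_iff[symmetric])

lemma clip_err:
  assumes "\<eta> > 0"
  shows "\<bar>x - clip x (1/\<eta>)\<bar> \<le> \<eta> * x^2"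
proof (cases "\<bar>x\<bar> \<le> 1/\<eta>")
  case True
  then have "clip x (1/\<eta>) = x" unfolding clip_def by auto
  then show ?thesis using assms by simp
next
  case False
  then have big: "\<eta> * \<bar>x\<bar> > 1" using assms by (simp add: field_simps)
  have "\<bar>x - clip x (1/\<eta>)\<bar> \<le> \<bar>x\<bar>"
  proof -
    have "1/\<eta> > 0" using assms by simp
    then show ?thesis using False unfolding clip_def by (auto simp: max_def min_def abs_if)
  qed
  also have "\<bar>x\<bar> \<le> \<eta> * \<bar>x\<bar> * \<bar>x\<bar>" using big by (simp add: mult_le_cancel_right1)
  also have "\<dots> = \<eta> * x^2" by (simp add: power2_eq_square abs_mult_self_eq)
  finally show ?thesis .
qed

locale algo = setting D B for D :: "((real ^ 'n::finite) \<times> real) measure" and B :: real +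
  fixes q :: "'n::finite pmf" and k :: nat and \<eta> :: real and ws :: "real ^ 'n::finite" and c :: real
  assumes k1: "k \<ge> 1" and eta: "\<eta> > 0"
begin

definition Psi :: "nat \<Rightarrow> 'n st3 \<Rightarrow> real" where
  "Psi t st = (case st of (zp, zm, acc) \<Rightarrow>
      real t * risk D ((1 / real t) *\<^sub>R acc) - real t * risk D ws
      + (B / \<eta>) * ln (l1norm zp + l1norm zm)
      - (1 / \<eta>) * (\<Sum>i\<in>UNIV. ws $ i * ln (zp $ i)) - real t * c)"

lemma Psi_simp: "Psi t (zp, zm, acc) =
      real t * risk D ((1 / real t) *\<^sub>R acc) - real t * risk D ws
      + (B / \<eta>) * ln (l1norm zp + l1norm zm)
      - (1 / \<eta>) * (\<Sum>i\<in>UNIV. ws $ i * ln (zp $ i)) - real t * c"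
  by (simp add: Psi_def)

lemma risk_avg_step:
  assumes "t = 0 \<longrightarrow> acc = 0"
  shows "real (Suc t) * risk D ((1 / real (Suc t)) *\<^sub>R (acc + w)) \<le> real t * risk D ((1 / real t) *\<^sub>R acc) + risk D w"
proof (cases "t = 0")
  case True then show ?thesis using assms by simp
next
  case False
  define a where "a = real t / real (Suc t)"
  have a: "0 \<le> a" "a \<le> 1" unfolding a_def by auto
  have eq: "(1 / real (Suc t)) *\<^sub>R (acc + w) = a *\<^sub>R ((1 / real t) *\<^sub>R acc) + (1 - a) *\<^sub>R w"
    using False unfolding a_def by (simp add: field_simps scaleR_add_right algebra_simps)
  have "risk D ((1 / real (Suc t)) *\<^sub>R (acc + w)) \<le> a * risk D ((1 / real t) *\<^sub>R acc) + (1 - a) * risk D w"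
    unfolding eq by (rule risk_convex[OF a])
  then have "real (Suc t) * risk D ((1 / real (Suc t)) *\<^sub>R (acc + w)) \<le>
      real (Suc t) * (a * risk D ((1 / real t) *\<^sub>R acc) + (1 - a) * risk D w)"
    by (intro mult_left_mono) auto
  also have "\<dots> = (real (Suc t) * a) * risk D ((1 / real t) *\<^sub>R acc) + (real (Suc t) * (1 - a)) * risk D w"
    by (simp add: algebra_simps)
  also have "real (Suc t) * a = real t" unfolding a_def by simp
  also have "real (Suc t) * (1 - a) = 1" unfolding a_def by (simp add: field_simps)
  finally show ?thesis by simp
qed

lemma Psi_path:
  fixes zp zm acc xt :: "real ^ 'n" and ph :: real
  assumes pos: "\<And>i. zp $ i > 0" "\<And>i. zm $ i > 0" and acc0: "t = 0 \<longrightarrow> acc = 0"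
  defines "w \<equiv> weight B zp zm" and "g \<equiv> ph *\<^sub>R xt"
  defines "gb \<equiv> (\<chi> i. clip (g $ i) (1 / \<eta>))"
  defines "W \<equiv> l1norm zp + l1norm zm"
  shows "Psi (Suc t) ((\<chi> i. zp $ i * exp (- \<eta> * gb $ i)), (\<chi> i. zm $ i * exp (\<eta> * gb $ i)), acc + w)
    \<le> Psi t (zp, zm, acc) + risk D w - risk D ws - g \<bullet> (w - ws)
       + \<eta> * (\<Sum>i\<in>UNIV. (g $ i)^2 * (2 * B * ((zp $ i + zm $ i) / W) + \<bar>ws $ i\<bar>)) - c"
proof -
  define zp' where "zp' = (\<chi> i. zp $ i * exp (- \<eta> * gb $ i))"
  define zm' where "zm' = (\<chi> i. zm $ i * exp (\<eta> * gb $ i))"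
  have gbb: "\<bar>gb $ i\<bar> \<le> 1 / \<eta>" for i
    unfolding gb_def using clip_abs[of "1/\<eta>"] eta by simp
  have Wpos: "W > 0"
  proof -
    have "l1norm zp > 0" using pos(1) by (simp add: l1norm_pos_vec sum_pos)
    then show ?thesis unfolding W_def using l1norm_nonneg[of zm] by linarith
  qed
  have pot: "ln (l1norm zp' + l1norm zm') - ln W \<le> - ((\<eta> / B) * (gb \<bullet> w))
         + \<eta>^2 * (\<Sum>i\<in>UNIV. ((zp $ i + zm $ i) / W) * (gb $ i)^2)"
    unfolding zp'_def zm'_def W_def w_def
    by (rule potential_step[OF eta Bpos pos gbb])
  have pot': "(B / \<eta>) * ln (l1norm zp' + l1norm zm') - (B / \<eta>) * ln W \<le> - (gb \<bullet> w)
         + \<eta> * B * (\<Sum>i\<in>UNIV. ((zp $ i + zm $ i) / W) * (gb $ i)^2)"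
  proof -
    have "(B / \<eta>) * (ln (l1norm zp' + l1norm zm') - ln W) \<le> (B / \<eta>) * (- ((\<eta> / B) * (gb \<bullet> w))
         + \<eta>^2 * (\<Sum>i\<in>UNIV. ((zp $ i + zm $ i) / W) * (gb $ i)^2))"
      using pot Bpos eta by (intro mult_left_mono) auto
    moreover have "(B / \<eta>) * (- ((\<eta> / B) * (gb \<bullet> w))
         + \<eta>^2 * (\<Sum>i\<in>UNIV. ((zp $ i + zm $ i) / W) * (gb $ i)^2)) = - (gb \<bullet> w)
         + \<eta> * B * (\<Sum>i\<in>UNIV. ((zp $ i + zm $ i) / W) * (gb $ i)^2)"
      using Bpos eta by (simp add: field_simps power2_eq_square)
    ultimately show ?thesis by (simp add: right_diff_distrib)
  qed
  have lnzp: "ln (zp' $ i) = ln (zp $ i) - \<eta> * gb $ i" for i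
    unfolding zp'_def using pos(1)[of i] by (simp add: ln_mult)
  have comp: "- (1 / \<eta>) * (\<Sum>i\<in>UNIV. ws $ i * ln (zp' $ i)) =
      - (1 / \<eta>) * (\<Sum>i\<in>UNIV. ws $ i * ln (zp $ i)) + gb \<bullet> ws"
    unfolding lnzp using eta
    by (simp add: inner_vec_def algebra_simps sum_subtractf sum_distrib_left sum_divide_distrib sum_negf)
  have avg: "real (Suc t) * risk D ((1 / real (Suc t)) *\<^sub>R (acc + w)) \<le> real t * risk D ((1 / real t) *\<^sub>R acc) + risk D w"
    by (rule risk_avg_step[OF acc0])
  have wi: "\<bar>w $ i\<bar> \<le> B * ((zp $ i + zm $ i) / W)" for i
  proof -
    have "\<bar>zp $ i - zm $ i\<bar> \<le> zp $ i + zm $ i" using pos[of i] by auto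
    then have "B / W * \<bar>zp $ i - zm $ i\<bar> \<le> B / W * (zp $ i + zm $ i)"
      using Bpos Wpos by (intro mult_left_mono) auto
    then show ?thesis unfolding w_def weight_def W_def[symmetric] using Bpos Wpos
      by (simp add: abs_mult)
  qed
  have clipterm: "- (gb \<bullet> (w - ws)) + \<eta> * B * (\<Sum>i\<in>UNIV. ((zp $ i + zm $ i) / W) * (gb $ i)^2)
      \<le> - (g \<bullet> (w - ws)) + \<eta> * (\<Sum>i\<in>UNIV. (g $ i)^2 * (2 * B * ((zp $ i + zm $ i) / W) + \<bar>ws $ i\<bar>))"
  proof -
    have pi: "0 \<le> (zp $ i + zm $ i) / W" for i using pos[of i] Wpos by auto
    have "- (gb $ i * (w - ws) $ i) + \<eta> * B * (((zp $ i + zm $ i) / W) * (gb $ i)^2)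
       \<le> - (g $ i * (w - ws) $ i) + \<eta> * ((g $ i)^2 * (2 * B * ((zp $ i + zm $ i) / W) + \<bar>ws $ i\<bar>))" for i
    proof -
      have e1: "\<bar>g $ i - gb $ i\<bar> \<le> \<eta> * (g $ i)^2" unfolding gb_def using clip_err[OF eta] by simp
      have e2: "(gb $ i)^2 \<le> (g $ i)^2" unfolding gb_def using clip_sq[of "1/\<eta>"] eta by simp
      have "- (gb $ i * (w - ws) $ i) \<le> - (g $ i * (w - ws) $ i) + \<bar>g $ i - gb $ i\<bar> * \<bar>(w - ws) $ i\<bar>"
      proof -
        have "(g $ i - gb $ i) * (w - ws) $ i \<le> \<bar>g $ i - gb $ i\<bar> * \<bar>(w - ws) $ i\<bar>"
          by (metis abs_ge_self abs_mult)
        moreover have "- (gb $ i * (w - ws) $ i) = - (g $ i * (w - ws) $ i) + (g $ i - gb $ i) * (w - ws) $ i"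
          by (simp add: algebra_simps)
        ultimately show ?thesis by linarith
      qed
      also have "\<dots> \<le> - (g $ i * (w - ws) $ i) + \<eta> * (g $ i)^2 * (\<bar>w $ i\<bar> + \<bar>ws $ i\<bar>)"
        using e1 by (intro add_left_mono mult_mono) auto
      also have "\<dots> \<le> - (g $ i * (w - ws) $ i) + \<eta> * (g $ i)^2 * (B * ((zp $ i + zm $ i) / W) + \<bar>ws $ i\<bar>)"
        using wi[of i] eta by (intro add_left_mono mult_left_mono) auto
      finally have A: "- (gb $ i * (w - ws) $ i) \<le> - (g $ i * (w - ws) $ i) + \<eta> * (g $ i)^2 * (B * ((zp $ i + zm $ i) / W) + \<bar>ws $ i\<bar>)" .
      have Bt: "\<eta> * B * (((zp $ i + zm $ i) / W) * (gb $ i)^2) \<le> \<eta> * B * (((zp $ i + zm $ i) / W) * (g $ i)^2)"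
        using e2 pi[of i] eta Bpos by (intro mult_left_mono) auto
      have "\<eta> * ((g $ i)^2 * (2 * B * ((zp $ i + zm $ i) / W) + \<bar>ws $ i\<bar>)) =
          \<eta> * (g $ i)^2 * (B * ((zp $ i + zm $ i) / W) + \<bar>ws $ i\<bar>) + \<eta> * B * (((zp $ i + zm $ i) / W) * (g $ i)^2)"
        by (simp add: algebra_simps)
      then show ?thesis using A Bt by linarith
    qed
    then have "(\<Sum>i\<in>UNIV. - (gb $ i * (w - ws) $ i) + \<eta> * B * (((zp $ i + zm $ i) / W) * (gb $ i)^2))
       \<le> (\<Sum>i\<in>UNIV. - (g $ i * (w - ws) $ i) + \<eta> * ((g $ i)^2 * (2 * B * ((zp $ i + zm $ i) / W) + \<bar>ws $ i\<bar>)))"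
      by (rule sum_mono)
    then show ?thesis
      by (simp add: inner_vec_def sum.distrib sum_negf sum_distrib_left sum_subtractf)
  qed
  have inner_split: "gb \<bullet> (w - ws) = gb \<bullet> w - gb \<bullet> ws" by (simp add: inner_diff_right)
  have wsd: "g \<bullet> (w - ws) = g \<bullet> w - g \<bullet> ws" by (simp add: inner_diff_right)
  show ?thesis
  proof -
    have e1: "(1 + real t) * risk D ws = real t * risk D ws + risk D ws" by (simp add: algebra_simps)
    have e2: "(1 + real t) * c = real t * c + c" by (simp add: algebra_simps)
    have e3: "- (1 / \<eta>) * X = - (1 / \<eta> * X)" for X by simp
    show ?thesis
      unfolding zp'_def[symmetric] zm'_def[symmetric] Psi_simp W_def[symmetric]
      using pot' comp avg clipterm inner_split e1 e2 e3 wsd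
      by (simp only: of_nat_Suc)
  qed
qed

end

lemma gaelr_step_eq:
  "gaelr_step B \<eta> q k (x, y) (zp, zm, acc) =
     xtilde_pmf q k x \<bind> (\<lambda>xt. phi_pmf (weight B zp zm) x y \<bind> (\<lambda>ph.
       return_pmf ((\<chi> i. zp $ i * exp (- \<eta> * (\<chi> i. clip ((ph *\<^sub>R xt) $ i) (1 / \<eta>)) $ i)),
                   (\<chi> i. zm $ i * exp (\<eta> * (\<chi> i. clip ((ph *\<^sub>R xt) $ i) (1 / \<eta>)) $ i)),
                   acc + weight B zp zm)))"
  by (simp add: gaelr_step_def Let_def)

lemma finite_step: "finite (set_pmf (gaelr_step B \<eta> q k ex st))"
  by (cases ex; cases st) (auto simp: gaelr_step_eq finite_xtilde finite_phi)

context algo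
begin

lemma E_step_bound:
  fixes zp zm acc x :: "real ^ 'n" and y :: real
  assumes pos: "\<And>i. zp $ i > 0" "\<And>i. zm $ i > 0" and acc0: "t = 0 \<longrightarrow> acc = 0"
    and xb: "linfnorm x \<le> 1" and yb: "\<bar>y\<bar> \<le> B"
    and zq: "\<And>i. pmf q i = 0 \<Longrightarrow> x $ i = 0"
  defines "w \<equiv> weight B zp zm"
  defines "W \<equiv> l1norm zp + l1norm zm"
  defines "pp \<equiv> (\<lambda>i. 2 * B * ((zp $ i + zm $ i) / W) + \<bar>ws $ i\<bar>)"
  shows "measure_pmf.expectation (gaelr_step B \<eta> q k (x, y) (zp, zm, acc)) (Psi (Suc t))
    \<le> Psi t (zp, zm, acc) + risk D w - risk D ws - ((w \<bullet> x - y) *\<^sub>R x) \<bullet> (w - ws)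
       + \<eta> * (l1norm w + B)^2 * (\<Sum>i\<in>UNIV. ((x $ i)^2 / pmf q i / real k + (x $ i)^2) * pp i) - c"
proof -
  define K where "K = Psi t (zp, zm, acc) + risk D w - risk D ws - c"
  define new where "new xt ph = ((\<chi> i. zp $ i * exp (- \<eta> * (\<chi> i. clip ((ph *\<^sub>R xt) $ i) (1 / \<eta>)) $ i)),
                   (\<chi> i. zm $ i * exp (\<eta> * (\<chi> i. clip ((ph *\<^sub>R xt) $ i) (1 / \<eta>)) $ i)),
                   acc + w)" for xt :: "real ^ 'n" and ph :: real
  define A where "A xt = (\<Sum>i\<in>UNIV. xt $ i * (w - ws) $ i)" for xt :: "real ^ 'n"
  define Q where "Q xt = (\<Sum>i\<in>UNIV. (xt $ i)^2 * pp i)" for xt :: "real ^ 'n"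
  define R where "R xt ph = K - ph * A xt + \<eta> * (ph^2 * Q xt)" for xt :: "real ^ 'n" and ph :: real
  let ?X = "xtilde_pmf q k x" and ?F = "phi_pmf w x y"
  have path: "Psi (Suc t) (new xt ph) \<le> R xt ph" for xt ph
  proof -
    have "Psi (Suc t) (new xt ph) \<le> Psi t (zp, zm, acc) + risk D w - risk D ws - (ph *\<^sub>R xt) \<bullet> (w - ws)
       + \<eta> * (\<Sum>i\<in>UNIV. ((ph *\<^sub>R xt) $ i)^2 * pp i) - c"
      unfolding new_def w_def pp_def W_def by (rule Psi_path[OF pos acc0])
    also have "(ph *\<^sub>R xt) \<bullet> (w - ws) = ph * A xt"
      unfolding A_def by (simp add: inner_vec_def sum_distrib_left mult.assoc)
    also have "(\<Sum>i\<in>UNIV. ((ph *\<^sub>R xt) $ i)^2 * pp i) = ph^2 * Q xt"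
      unfolding Q_def by (simp add: sum_distrib_left power_mult_distrib mult_ac)
    finally show ?thesis unfolding R_def K_def by simp
  qed
  have int_F: "integrable (measure_pmf ?F) f" for f :: "real \<Rightarrow> real"
    by (rule integrable_measure_pmf_finite) (simp add: finite_phi)
  have int_X: "integrable (measure_pmf ?X) f" for f :: "real ^ 'n \<Rightarrow> real"
    by (rule integrable_measure_pmf_finite) (simp add: finite_xtilde)
  have "measure_pmf.expectation (gaelr_step B \<eta> q k (x, y) (zp, zm, acc)) (Psi (Suc t))
      = measure_pmf.expectation ?X (\<lambda>xt. measure_pmf.expectation ?F (\<lambda>ph. Psi (Suc t) (new xt ph)))"
    unfolding gaelr_step_eq w_def[symmetric] new_def
    by (simp add: E_bind finite_xtilde finite_phi)
  also have "\<dots> \<le> measure_pmf.expectation ?X (\<lambda>xt. measure_pmf.expectation ?F (\<lambda>ph. R xt ph))"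
    by (intro integral_mono int_X int_F path)
  also have "\<dots> = measure_pmf.expectation ?X (\<lambda>xt. K - (w \<bullet> x - y) * A xt
        + \<eta> * (measure_pmf.expectation ?F (\<lambda>ph. ph^2) * Q xt))"
  proof (intro Bochner_Integration.integral_cong refl)
    fix xt
    have "measure_pmf.expectation ?F (\<lambda>ph. R xt ph) =
        K - measure_pmf.expectation ?F (\<lambda>ph. ph) * A xt + \<eta> * (measure_pmf.expectation ?F (\<lambda>ph. ph^2) * Q xt)"
      unfolding R_def by (simp add: int_F prob_space_measure_pmf measure_pmf.prob_space)
    then show "measure_pmf.expectation ?F (\<lambda>ph. R xt ph) = K - (w \<bullet> x - y) * A xt
        + \<eta> * (measure_pmf.expectation ?F (\<lambda>ph. ph^2) * Q xt)"
      by (simp add: E_phi)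
  qed
  also have "\<dots> = K - (w \<bullet> x - y) * measure_pmf.expectation ?X A
        + \<eta> * (measure_pmf.expectation ?F (\<lambda>ph. ph^2) * measure_pmf.expectation ?X Q)"
    by (simp add: int_X measure_pmf.prob_space)
  also have "measure_pmf.expectation ?X A = x \<bullet> (w - ws)"
  proof -
    have "measure_pmf.expectation ?X A = (\<Sum>i\<in>UNIV. measure_pmf.expectation ?X (\<lambda>xt. xt $ i) * (w - ws) $ i)"
      unfolding A_def by (simp add: int_X)
    also have "\<dots> = (\<Sum>i\<in>UNIV. x $ i * (w - ws) $ i)"
    proof (intro sum.cong refl)
      fix i
      have "pmf q i * (x $ i / pmf q i) = x $ i" using zq[of i] by (cases "pmf q i = 0") auto
      then show "measure_pmf.expectation ?X (\<lambda>xt. xt $ i) * (w - ws) $ i = x $ i * (w - ws) $ i"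
        by (simp add: E_xtilde_1[OF k1])
    qed
    finally show ?thesis by (simp add: inner_vec_def)
  qed
  finally have main: "measure_pmf.expectation (gaelr_step B \<eta> q k (x, y) (zp, zm, acc)) (Psi (Suc t))
     \<le> K - (w \<bullet> x - y) * (x \<bullet> (w - ws)) + \<eta> * (measure_pmf.expectation ?F (\<lambda>ph. ph^2) * measure_pmf.expectation ?X Q)" .
  have Wpos: "W > 0"
  proof -
    have "l1norm zp > 0" using pos(1) by (simp add: l1norm_pos_vec sum_pos)
    then show ?thesis unfolding W_def using l1norm_nonneg[of zm] by linarith
  qed
  have ppnn: "0 \<le> pp i" for i unfolding pp_def using pos[of i] Wpos Bpos by (auto intro!: add_nonneg_nonneg)
  have EQ: "measure_pmf.expectation ?X Q \<le> (\<Sum>i\<in>UNIV. ((x $ i)^2 / pmf q i / real k + (x $ i)^2) * pp i)"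
  proof -
    have "measure_pmf.expectation ?X Q = (\<Sum>i\<in>UNIV. measure_pmf.expectation ?X (\<lambda>xt. (xt $ i)^2) * pp i)"
      unfolding Q_def by (simp add: int_X)
    also have "\<dots> \<le> (\<Sum>i\<in>UNIV. ((x $ i)^2 / pmf q i / real k + (x $ i)^2) * pp i)"
    proof (intro sum_mono mult_right_mono)
      fix i
      show "0 \<le> pp i" by (rule ppnn)
      have e1: "pmf q i * (x $ i / pmf q i)^2 = (x $ i)^2 / pmf q i"
        by (cases "pmf q i = 0") (auto simp: power2_eq_square)
      have e2: "(pmf q i * (x $ i / pmf q i))^2 = (x $ i)^2"
        using zq[of i] by (cases "pmf q i = 0") auto
      have "(1 - 1 / real k) * (x $ i)^2 \<le> (x $ i)^2"
      proof (rule mult_left_le_one_le)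
        show "0 \<le> 1 - 1 / real k" using k1 by (simp add: field_simps)
      qed auto
      then show "measure_pmf.expectation ?X (\<lambda>xt. (xt $ i)^2) \<le> (x $ i)^2 / pmf q i / real k + (x $ i)^2"
        unfolding E_xtilde_2[OF k1] e1 e2 by simp
    qed
    finally show ?thesis .
  qed
  have EQ0: "0 \<le> measure_pmf.expectation ?X Q"
    unfolding Q_def by (intro integral_nonneg_AE) (auto intro!: sum_nonneg mult_nonneg_nonneg ppnn)
  have EF: "measure_pmf.expectation ?F (\<lambda>ph. ph^2) \<le> (l1norm w + B)^2"
    by (rule E_phi_sq[OF xb yb])
  have EF0: "0 \<le> measure_pmf.expectation ?F (\<lambda>ph. ph^2)"
    by (intro integral_nonneg_AE) auto
  have "measure_pmf.expectation ?F (\<lambda>ph. ph^2) * measure_pmf.expectation ?X Q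
      \<le> (l1norm w + B)^2 * (\<Sum>i\<in>UNIV. ((x $ i)^2 / pmf q i / real k + (x $ i)^2) * pp i)"
    by (rule mult_mono[OF EF EQ]) (auto simp: EQ0)
  then have "\<eta> * (measure_pmf.expectation ?F (\<lambda>ph. ph^2) * measure_pmf.expectation ?X Q)
      \<le> \<eta> * (l1norm w + B)^2 * (\<Sum>i\<in>UNIV. ((x $ i)^2 / pmf q i / real k + (x $ i)^2) * pp i)"
    using eta by (simp add: mult.assoc mult_left_mono)
  moreover have "((w \<bullet> x - y) *\<^sub>R x) \<bullet> (w - ws) = (w \<bullet> x - y) * (x \<bullet> (w - ws))"
    by simp
  ultimately show ?thesis using main unfolding K_def by linarith
qed

end

lemma l1norm_triangle: "l1norm (a + b) \<le> l1norm a + l1norm (b :: real ^ 'n::finite)"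
  unfolding l1norm_def by (simp add: sum.distrib[symmetric] sum_mono abs_triangle_ineq)

lemma l1norm_scale: "l1norm (r *\<^sub>R a) = \<bar>r\<bar> * l1norm (a :: real ^ 'n::finite)"
  unfolding l1norm_def by (simp add: abs_mult sum_distrib_left)

lemma l1norm_weight:
  assumes "\<And>i. zp $ i > 0" "\<And>i. zm $ i > 0" "B \<ge> 0"
  shows "l1norm (weight B zp zm) \<le> B"
proof -
  have W: "l1norm zp + l1norm zm = (\<Sum>i\<in>UNIV. zp $ i + zm $ i)"
    using assms by (simp add: l1norm_pos_vec sum.distrib)
  have Wpos: "l1norm zp + l1norm zm > 0"
    unfolding W by (intro sum_pos) (auto intro: add_pos_pos assms)
  have "l1norm (zp - zm) \<le> l1norm zp + l1norm zm"
    unfolding l1norm_def by (simp add: sum.distrib[symmetric] sum_mono abs_triangle_ineq4)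
  then have "B / (l1norm zp + l1norm zm) * l1norm (zp - zm) \<le> B / (l1norm zp + l1norm zm) * (l1norm zp + l1norm zm)"
    using assms(3) Wpos by (intro mult_left_mono) auto
  then show ?thesis using Wpos assms(3) unfolding weight_def l1norm_scale by simp
qed

definition Inv :: "real \<Rightarrow> nat \<Rightarrow> 'n::finite st3 \<Rightarrow> bool" where
  "Inv B t st = (case st of (zp, zm, acc) \<Rightarrow>
     (\<forall>i. 0 < zp $ i \<and> zm $ i = 1 / zp $ i \<and> \<bar>ln (zp $ i)\<bar> \<le> real t)
     \<and> l1norm acc \<le> real t * B \<and> (t = 0 \<longrightarrow> acc = 0))"

lemma Inv_init: "Inv B 0 ((\<chi> i. 1), (\<chi> i. 1), 0)"
  by (simp add: Inv_def l1norm_def)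

lemma Inv_step:
  assumes "Inv B t (zp, zm, acc)" "\<eta> > 0" "B \<ge> 0"
    and "st' \<in> set_pmf (gaelr_step B \<eta> q k ex (zp, zm, acc))"
  shows "Inv B (Suc t) st'"
proof -
  obtain x y where ex: "ex = (x, y)" by (cases ex)
  from assms(4) obtain xt ph where st': "st' = ((\<chi> i. zp $ i * exp (- \<eta> * (\<chi> i. clip ((ph *\<^sub>R xt) $ i) (1 / \<eta>)) $ i)),
                   (\<chi> i. zm $ i * exp (\<eta> * (\<chi> i. clip ((ph *\<^sub>R xt) $ i) (1 / \<eta>)) $ i)),
                   acc + weight B zp zm)"
    unfolding ex gaelr_step_eq by auto
  define gb where "gb = (\<chi> i. clip ((ph *\<^sub>R xt) $ i) (1 / \<eta>))"
  have I: "0 < zp $ i" "zm $ i = 1 / zp $ i" "\<bar>ln (zp $ i)\<bar> \<le> real t" for i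
    using assms(1) by (auto simp: Inv_def)
  have I2: "l1norm acc \<le> real t * B" using assms(1) by (auto simp: Inv_def)
  have gbb: "\<bar>\<eta> * gb $ i\<bar> \<le> 1" for i
  proof -
    have "\<bar>gb $ i\<bar> \<le> 1 / \<eta>" unfolding gb_def using clip_abs[of "1/\<eta>"] assms(2) by simp
    then show ?thesis using assms(2) by (simp add: abs_mult field_simps)
  qed
  have zmpos: "0 < zm $ i" for i using I(1)[of i] I(2)[of i] by simp
  have "l1norm (acc + weight B zp zm) \<le> real (Suc t) * B"
    using l1norm_triangle[of acc "weight B zp zm"] l1norm_weight[of zp zm B, OF I(1) zmpos assms(3)] I2
    by (simp add: algebra_simps)
  moreover have "0 < zp $ i * exp (- \<eta> * gb $ i)" for i using I(1)[of i] by simp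
  moreover have "zm $ i * exp (\<eta> * gb $ i) = 1 / (zp $ i * exp (- \<eta> * gb $ i))" for i
    using I(1)[of i] I(2)[of i] by (simp add: exp_minus field_simps)
  moreover have "\<bar>ln (zp $ i * exp (- \<eta> * gb $ i))\<bar> \<le> real (Suc t)" for i
  proof -
    have "ln (zp $ i * exp (- \<eta> * gb $ i)) = ln (zp $ i) - \<eta> * gb $ i"
      using I(1)[of i] by (simp add: ln_mult)
    then show ?thesis using I(3)[of i] gbb[of i] by simp
  qed
  ultimately show ?thesis unfolding st' gb_def[symmetric] Inv_def by simp
qed

context algo
begin

definition Cb :: "nat \<Rightarrow> real" where
  "Cb t = real t * (2 * B^2) + real t * \<bar>risk D ws\<bar> + (B / \<eta>) * (ln (2 * real CARD('n)) + real t)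
        + (1 / \<eta>) * (\<Sum>i\<in>UNIV. \<bar>ws $ i\<bar>) * real t + real t * \<bar>c\<bar>"

lemma Psi_bound:
  assumes "Inv B t st"
  shows "\<bar>Psi t st\<bar> \<le> Cb t"
proof -
  obtain zp zm acc where st: "st = (zp, zm, acc)" by (cases st) auto
  have I: "0 < zp $ i" "zm $ i = 1 / zp $ i" "\<bar>ln (zp $ i)\<bar> \<le> real t" for i
    using assms by (auto simp: Inv_def st)
  have I2: "l1norm acc \<le> real t * B" "t = 0 \<longrightarrow> acc = 0" using assms by (auto simp: Inv_def st)
  have R: "0 \<le> real t * risk D ((1 / real t) *\<^sub>R acc) \<and> real t * risk D ((1 / real t) *\<^sub>R acc) \<le> real t * (2 * B^2)"
  proof (cases "t = 0")
    case True then show ?thesis by simp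
  next
    case False
    have "l1norm ((1 / real t) *\<^sub>R acc) \<le> B"
      using I2(1) False by (simp add: l1norm_scale field_simps)
    then have "(l1norm ((1 / real t) *\<^sub>R acc) + B)^2 \<le> (B + B)^2"
      using l1norm_nonneg[of "(1 / real t) *\<^sub>R acc"] Bpos by (intro power_mono) auto
    then have "risk D ((1 / real t) *\<^sub>R acc) \<le> (1/2) * (B + B)^2"
      using risk_le[of "(1 / real t) *\<^sub>R acc"] by linarith
    then show ?thesis using risk_nonneg by (simp add: mult_left_mono power2_eq_square)
  qed
  define W where "W = l1norm zp + l1norm zm"
  have zmpos: "0 < zm $ i" for i using I(1)[of i] I(2)[of i] by simp
  have W: "W = (\<Sum>i\<in>UNIV. zp $ i + 1 / zp $ i)"
    unfolding W_def using I(1) zmpos by (simp add: l1norm_pos_vec sum.distrib I(2))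
  have zp_le: "zp $ i \<le> exp (real t)" "1 / zp $ i \<le> exp (real t)" for i
  proof -
    have "ln (zp $ i) \<le> real t" using I(3)[of i] by simp
    then show "zp $ i \<le> exp (real t)" using I(1)[of i] by (metis exp_le_cancel_iff exp_ln)
    have "ln (1 / zp $ i) \<le> real t" using I(3)[of i] I(1)[of i] by (simp add: ln_div)
    then show "1 / zp $ i \<le> exp (real t)" using I(1)[of i]
      by (metis exp_le_cancel_iff exp_ln zero_less_divide_1_iff)
  qed
  have two: "2 \<le> zp $ i + 1 / zp $ i" for i
  proof -
    have "0 \<le> (zp $ i - 1)^2 / zp $ i" using I(1)[of i] by simp
    also have "(zp $ i - 1)^2 / zp $ i = zp $ i + 1 / zp $ i - 2"
      using I(1)[of i] by (simp add: field_simps power2_eq_square)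
    finally show ?thesis by simp
  qed
  have Wge: "2 * real CARD('n) \<le> W" unfolding W
    using sum_mono[of UNIV "\<lambda>_. 2" "\<lambda>i. zp $ i + 1 / zp $ i", OF two] by simp
  have Wle: "W \<le> 2 * real CARD('n) * exp (real t)"
  proof -
    have "W \<le> (\<Sum>i\<in>(UNIV::'n set). 2 * exp (real t))" unfolding W
      by (rule sum_mono) (use zp_le in \<open>smt (verit)\<close>)
    then show ?thesis by simp
  qed
  have card1: "1 \<le> real CARD('n)" by simp
  have Wpos: "0 < W" using Wge card1 by linarith
  have lnW: "0 \<le> ln W \<and> ln W \<le> ln (2 * real CARD('n)) + real t"
  proof
    have "1 \<le> W" using Wge card1 by linarith
    then show "0 \<le> ln W" by simp
    have "ln W \<le> ln (2 * real CARD('n) * exp (real t))" using Wle Wpos by simp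
    also have "\<dots> = ln (2 * real CARD('n)) + real t" by (simp add: ln_mult)
    finally show "ln W \<le> ln (2 * real CARD('n)) + real t" .
  qed
  have lnW': "\<bar>(B / \<eta>) * ln W\<bar> \<le> (B / \<eta>) * (ln (2 * real CARD('n)) + real t)"
  proof -
    have "0 \<le> B / \<eta>" using Bpos eta by simp
    then have "(B / \<eta>) * ln W \<le> (B / \<eta>) * (ln (2 * real CARD('n)) + real t)"
      using lnW by (intro mult_left_mono) auto
    moreover have "0 \<le> (B / \<eta>) * ln W" using lnW \<open>0 \<le> B / \<eta>\<close> by (intro mult_nonneg_nonneg) auto
    ultimately show ?thesis by simp
  qed
  have S: "\<bar>(1 / \<eta>) * (\<Sum>i\<in>UNIV. ws $ i * ln (zp $ i))\<bar> \<le> (1 / \<eta>) * (\<Sum>i\<in>UNIV. \<bar>ws $ i\<bar>) * real t"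
  proof -
    have "\<bar>\<Sum>i\<in>UNIV. ws $ i * ln (zp $ i)\<bar> \<le> (\<Sum>i\<in>UNIV. \<bar>ws $ i\<bar> * real t)"
      by (rule order_trans[OF sum_abs], intro sum_mono) (simp add: abs_mult I(3) mult_left_mono)
    then show ?thesis using eta by (simp add: abs_mult sum_distrib_right[symmetric] divide_right_mono)
  qed
  have "\<bar>real t * risk D ws\<bar> = real t * \<bar>risk D ws\<bar>" by (simp add: abs_mult)
  moreover have "\<bar>real t * c\<bar> = real t * \<bar>c\<bar>" by (simp add: abs_mult)
  ultimately show ?thesis unfolding st Psi_simp Cb_def W_def[symmetric] using R lnW' S
    by (smt (verit))
qed

end

lemma meas_vec:
  fixes f :: "'a \<Rightarrow> real ^ 'n::finite"
  assumes "\<And>i. (\<lambda>x. f x $ i) \<in> borel_measurable M"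
  shows "f \<in> borel_measurable M"
  using assms by (subst borel_measurable_euclidean_space) (auto simp: Basis_vec_def cart_eq_inner_axis[symmetric])

lemma meas_l1norm[measurable]: "(l1norm :: real ^ 'n::finite \<Rightarrow> real) \<in> borel_measurable borel"
  unfolding l1norm_def by measurable

lemma meas_clip[measurable]: "(\<lambda>p. clip (fst p) (snd p)) \<in> borel_measurable (borel :: (real \<times> real) measure)"
  unfolding clip_def borel_prod[symmetric] by measurable

lemma meas_pmf_wdist[measurable]:
  "(\<lambda>w :: real ^ 'n::finite. pmf (wdist w) j) \<in> borel_measurable borel"
proof -
  have "(\<lambda>w :: real ^ 'n. pmf (wdist w) j) = (\<lambda>w. if l1norm w = 0 then 1 / real CARD('n) else \<bar>w $ j\<bar> / l1norm w)"
    by (auto simp: pmf_wdist l1norm_eq_0)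
  also have "\<dots> \<in> borel_measurable borel" by measurable
  finally show ?thesis .
qed

lemma meas_weight[measurable]:
  "(\<lambda>p :: (real ^ 'n::finite) \<times> (real ^ 'n). weight B (fst p) (snd p)) \<in> borel_measurable borel"
  unfolding weight_def borel_prod[symmetric] by measurable


lemma meas_pair_comp:
  assumes f: "case_prod f \<in> borel_measurable (N \<Otimes>\<^sub>M M)"
    and h: "(\<lambda>x. h (fst x) (snd x)) \<in> measurable (N \<Otimes>\<^sub>M M') M"
  shows "(\<lambda>x. f (fst x) (h (fst x) (snd x)) :: real) \<in> borel_measurable (N \<Otimes>\<^sub>M M')"
proof -
  have "(\<lambda>x. (fst x, h (fst x) (snd x))) \<in> measurable (N \<Otimes>\<^sub>M M') (N \<Otimes>\<^sub>M M)"
    using h by (intro measurable_Pair) auto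
  from measurable_compose[OF this f] show ?thesis by simp
qed

lemma meas_sum_draws:
  fixes X :: "'p \<Rightarrow> real ^ 'n::finite" and q :: "'n pmf"
  assumes X[measurable]: "X \<in> borel_measurable N"
    and f: "case_prod f \<in> borel_measurable (N \<Otimes>\<^sub>M (borel :: (real ^ 'n) measure))"
  shows "(\<lambda>p. measure_pmf.expectation (sum_draws q (X p) r) (f p) :: real) \<in> borel_measurable N"
  using f
proof (induction r arbitrary: f)
  case 0
  have "(\<lambda>p. (p, 0 :: real ^ 'n)) \<in> measurable N (N \<Otimes>\<^sub>M borel)" by measurable
  from measurable_compose[OF this 0] show ?case by simp
next
  case (Suc r)
  have "(\<lambda>p. measure_pmf.expectation (sum_draws q (X p) (Suc r)) (f p)) =
    (\<lambda>p. \<Sum>j\<in>UNIV. pmf q j * measure_pmf.expectation (sum_draws q (X p) r)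
        (\<lambda>s. f p (s + (X p $ j / pmf q j) *\<^sub>R axis j 1)))"
    by (rule ext, rule E_sum_draws_Suc)
  also have "\<dots> \<in> borel_measurable N"
  proof (intro borel_measurable_sum borel_measurable_times borel_measurable_const)
    fix j
    show "(\<lambda>p. measure_pmf.expectation (sum_draws q (X p) r)
        (\<lambda>s. f p (s + (X p $ j / pmf q j) *\<^sub>R axis j 1))) \<in> borel_measurable N"
    proof (rule Suc.IH)
      have a: "(\<lambda>x. X (fst x) $ j) \<in> borel_measurable (N \<Otimes>\<^sub>M (borel :: (real ^ 'n) measure))"
        using measurable_compose[OF measurable_compose[OF measurable_fst[of N "borel :: (real ^ 'n) measure"] X] borel_measurable_nth[of j]] by simp
      have "(\<lambda>x. snd x + (X (fst x) $ j / pmf q j) *\<^sub>R axis j 1) \<in> measurable (N \<Otimes>\<^sub>M borel) (borel :: (real ^ 'n) measure)"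
        by (intro borel_measurable_add borel_measurable_scaleR borel_measurable_divide a borel_measurable_const measurable_snd)
      from meas_pair_comp[OF Suc.prems this] show
        "(\<lambda>(p, s). f p (s + (X p $ j / pmf q j) *\<^sub>R axis j 1)) \<in> borel_measurable (N \<Otimes>\<^sub>M borel)"
        by (simp add: case_prod_beta')
    qed
  qed
  finally show ?case .
qed


lemma meas_clip_raw[measurable (raw)]:
  assumes [measurable]: "f \<in> borel_measurable M" "g \<in> borel_measurable M"
  shows "(\<lambda>x. clip (f x) (g x)) \<in> borel_measurable M"
  unfolding clip_def by measurable

lemma meas_fst_raw[measurable (raw)]:
  fixes f :: "'a \<Rightarrow> ('b::topological_space) \<times> ('c::topological_space)"
  assumes "f \<in> borel_measurable M"
  shows "(\<lambda>x. fst (f x)) \<in> borel_measurable M"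
  by (rule measurable_compose[OF assms borel_measurable_continuous_onI]) (intro continuous_intros)

lemma meas_snd_raw[measurable (raw)]:
  fixes f :: "'a \<Rightarrow> ('b::topological_space) \<times> ('c::topological_space)"
  assumes "f \<in> borel_measurable M"
  shows "(\<lambda>x. snd (f x)) \<in> borel_measurable M"
  by (rule measurable_compose[OF assms borel_measurable_continuous_onI]) (intro continuous_intros)

lemma meas_l1norm_raw[measurable (raw)]:
  "(f :: 'a \<Rightarrow> real ^ 'n::finite) \<in> borel_measurable M \<Longrightarrow> (\<lambda>x. l1norm (f x)) \<in> borel_measurable M"
  by (rule measurable_compose[OF _ meas_l1norm])

lemma meas_weight_raw[measurable (raw)]:
  fixes f g :: "'a \<Rightarrow> real ^ 'n::finite"
  assumes [measurable]: "f \<in> borel_measurable M" "g \<in> borel_measurable M"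
  shows "(\<lambda>x. weight B (f x) (g x)) \<in> borel_measurable M"
  unfolding weight_def by measurable

lemma meas_pmf_wdist_raw[measurable (raw)]:
  "(f :: 'a \<Rightarrow> real ^ 'n::finite) \<in> borel_measurable M \<Longrightarrow> (\<lambda>x. pmf (wdist (f x)) j) \<in> borel_measurable M"
  by (rule measurable_compose[OF _ meas_pmf_wdist])

lemma meas_nth_raw[measurable (raw)]:
  "(f :: 'a \<Rightarrow> real ^ 'n::finite) \<in> borel_measurable M \<Longrightarrow> (\<lambda>x. f x $ i) \<in> borel_measurable M"
  by (rule measurable_compose[OF _ borel_measurable_nth])

definition newst :: "real \<Rightarrow> real \<Rightarrow> real ^ 'n::finite \<Rightarrow> real ^ 'n \<Rightarrow> real ^ 'n \<Rightarrow> real ^ 'n \<Rightarrow> real \<Rightarrow> 'n st3" where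
  "newst B \<eta> zp zm acc xt ph = ((\<chi> i. zp $ i * exp (- \<eta> * clip ((ph *\<^sub>R xt) $ i) (1 / \<eta>))),
     (\<chi> i. zm $ i * exp (\<eta> * clip ((ph *\<^sub>R xt) $ i) (1 / \<eta>))), acc + weight B zp zm)"

lemma meas_newst[measurable (raw)]:
  fixes Zp Zm Acc Xt :: "'a \<Rightarrow> real ^ 'n::finite"
  assumes [measurable]: "Zp \<in> borel_measurable M" "Zm \<in> borel_measurable M" "Acc \<in> borel_measurable M"
    "Xt \<in> borel_measurable M" "Ph \<in> borel_measurable M"
  shows "(\<lambda>z. newst B \<eta> (Zp z) (Zm z) (Acc z) (Xt z) (Ph z)) \<in> borel_measurable M"
proof -
  have a: "(\<lambda>z. (\<chi> i. Zp z $ i * exp (- \<eta> * clip ((Ph z *\<^sub>R Xt z) $ i) (1 / \<eta>)))) \<in> borel_measurable M"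
    by (rule meas_vec) simp
  have b: "(\<lambda>z. (\<chi> i. Zm z $ i * exp (\<eta> * clip ((Ph z *\<^sub>R Xt z) $ i) (1 / \<eta>)))) \<in> borel_measurable M"
    by (rule meas_vec) simp
  show ?thesis unfolding newst_def using a b by measurable
qed

lemma step_eq2:
  "gaelr_step B \<eta> q k (x, y) (zp, zm, acc) =
     xtilde_pmf q k x \<bind> (\<lambda>xt. phi_pmf (weight B zp zm) x y \<bind> (\<lambda>ph.
       return_pmf (newst B \<eta> zp zm acc xt ph)))"
  unfolding gaelr_step_eq newst_def by simp

lemma E_step_formula:
  fixes h :: "'n::finite st3 \<Rightarrow> real"
  shows "measure_pmf.expectation (gaelr_step B \<eta> q k (x, y) (zp, zm, acc)) h =
    measure_pmf.expectation (sum_draws q x k) (\<lambda>s. \<Sum>j\<in>UNIV.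
       pmf (wdist (weight B zp zm)) j *
       h (newst B \<eta> zp zm acc ((1 / real k) *\<^sub>R s)
            (sgn (weight B zp zm $ j) * l1norm (weight B zp zm) * x $ j - y)))"
  unfolding step_eq2
  by (simp add: E_bind finite_xtilde finite_phi E_phi_general xtilde_pmf_def map_pmf_def
      bind_assoc_pmf bind_return_pmf finite_sum_draws)

lemma meas_step:
  fixes X :: "'p \<Rightarrow> (real ^ 'n::finite) \<times> real" and ST :: "'p \<Rightarrow> 'n st3"
  assumes X[measurable]: "X \<in> borel_measurable N" and ST[measurable]: "ST \<in> borel_measurable N"
    and f: "case_prod f \<in> borel_measurable (N \<Otimes>\<^sub>M (borel :: 'n st3 measure))"
  shows "(\<lambda>p. measure_pmf.expectation (gaelr_step B \<eta> q k (X p) (ST p)) (f p) :: real) \<in> borel_measurable N"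
proof -
  define w where "w p = weight B (fst (ST p)) (fst (snd (ST p)))" for p
  define G where "G p s = (\<Sum>j\<in>UNIV.
       pmf (wdist (w p)) j *
       f p (newst B \<eta> (fst (ST p)) (fst (snd (ST p))) (snd (snd (ST p))) ((1 / real k) *\<^sub>R s)
            (sgn (w p $ j) * l1norm (w p) * fst (X p) $ j - snd (X p))))" for p s
  have eq: "measure_pmf.expectation (gaelr_step B \<eta> q k (X p) (ST p)) (f p) =
      measure_pmf.expectation (sum_draws q (fst (X p)) k) (G p)" for p
  proof -
    obtain x y where X: "X p = (x, y)" by (cases "X p")
    obtain zp zm acc where S: "ST p = (zp, zm, acc)" by (cases "ST p") auto
    show ?thesis unfolding X S E_step_formula G_def w_def by (simp add: X S)
  qed
  have wm[measurable]: "w \<in> borel_measurable N" unfolding w_def by measurable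
  have Gm: "case_prod G \<in> borel_measurable (N \<Otimes>\<^sub>M (borel :: (real ^ 'n) measure))"
  proof -
    have "(\<lambda>x. G (fst x) (snd x)) \<in> borel_measurable (N \<Otimes>\<^sub>M (borel :: (real ^ 'n) measure))"
      unfolding G_def
    proof (intro borel_measurable_sum borel_measurable_times)
      fix j
      show "(\<lambda>x. pmf (wdist (w (fst x))) j) \<in> borel_measurable (N \<Otimes>\<^sub>M borel)" by measurable
      have "(\<lambda>x. newst B \<eta> (fst (ST (fst x))) (fst (snd (ST (fst x)))) (snd (snd (ST (fst x))))
           ((1 / real k) *\<^sub>R snd x)
            (sgn (w (fst x) $ j) * l1norm (w (fst x)) * fst (X (fst x)) $ j - snd (X (fst x))))
          \<in> measurable (N \<Otimes>\<^sub>M borel) borel"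
        by measurable
      from meas_pair_comp[OF f this] show "(\<lambda>x. f (fst x) (newst B \<eta> (fst (ST (fst x))) (fst (snd (ST (fst x)))) (snd (snd (ST (fst x))))
           ((1 / real k) *\<^sub>R snd x)
            (sgn (w (fst x) $ j) * l1norm (w (fst x)) * fst (X (fst x)) $ j - snd (X (fst x)))))
          \<in> borel_measurable (N \<Otimes>\<^sub>M borel)" .
    qed
    then show ?thesis by (simp add: case_prod_beta')
  qed
  have "(\<lambda>p. measure_pmf.expectation (sum_draws q (fst (X p)) k) (G p)) \<in> borel_measurable N"
    by (rule meas_sum_draws[OF _ Gm]) measurable
  then show ?thesis unfolding eq .
qed


lemma finite_run: "finite (set_pmf (gaelr_run B \<eta> q k S t))"
  by (induction t) (auto simp: finite_step)

lemma Inv_run: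
  assumes "\<eta> > 0" "B \<ge> 0"
  shows "st \<in> set_pmf (gaelr_run B \<eta> q k S t) \<Longrightarrow> Inv B t st"
proof (induction t arbitrary: st)
  case 0 then show ?case by (simp add: Inv_init)
next
  case (Suc t)
  then obtain st0 where st0: "st0 \<in> set_pmf (gaelr_run B \<eta> q k S t)"
    and st: "st \<in> set_pmf (gaelr_step B \<eta> q k (S t) st0)" by auto
  obtain zp zm acc where e: "st0 = (zp, zm, acc)" by (cases st0) auto
  show ?case using Inv_step[OF _ assms(1) assms(2), of t zp zm acc st q k "S t"] Suc.IH[OF st0] st e by simp
qed

lemma run_prefix:
  "(\<And>s. s < t \<Longrightarrow> S s = S' s) \<Longrightarrow> gaelr_run B \<eta> q k S t = gaelr_run B \<eta> q k S' t"
  by (induction t) auto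

lemma E_run_Suc:
  fixes h :: "'n::finite st3 \<Rightarrow> real"
  shows "measure_pmf.expectation (gaelr_run B \<eta> q k S (Suc t)) h =
    measure_pmf.expectation (gaelr_run B \<eta> q k S t) (\<lambda>st. measure_pmf.expectation (gaelr_step B \<eta> q k (S t) st) h)"
  by (simp add: E_bind finite_run finite_step)

lemma meas_run:
  fixes SS :: "'p \<Rightarrow> nat \<Rightarrow> (real ^ 'n::finite) \<times> real"
  assumes SS: "\<And>s. s < t \<Longrightarrow> (\<lambda>p. SS p s) \<in> borel_measurable N"
    and f: "case_prod f \<in> borel_measurable (N \<Otimes>\<^sub>M (borel :: 'n st3 measure))"
  shows "(\<lambda>p. measure_pmf.expectation (gaelr_run B \<eta> q k (SS p) t) (f p) :: real) \<in> borel_measurable N"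
  using SS f
proof (induction t arbitrary: f)
  case 0
  have "(\<lambda>p. (p, ((\<chi> i. 1), (\<chi> i. 1), 0) :: 'n st3)) \<in> measurable N (N \<Otimes>\<^sub>M borel)" by measurable
  from measurable_compose[OF this 0(2)] show ?case by simp
next
  case (Suc t)
  define f' where "f' p st = measure_pmf.expectation (gaelr_step B \<eta> q k (SS p t) st) (f p)" for p st
  have eq: "(\<lambda>p. measure_pmf.expectation (gaelr_run B \<eta> q k (SS p) (Suc t)) (f p)) =
      (\<lambda>p. measure_pmf.expectation (gaelr_run B \<eta> q k (SS p) t) (f' p))"
    unfolding f'_def by (rule ext, rule E_run_Suc)
  have f'm: "case_prod f' \<in> borel_measurable (N \<Otimes>\<^sub>M (borel :: 'n st3 measure))"
  proof -
    have X: "(\<lambda>x. SS (fst x) t) \<in> borel_measurable (N \<Otimes>\<^sub>M (borel :: 'n st3 measure))"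
      using measurable_compose[OF measurable_fst[of N "borel :: 'n st3 measure"] Suc.prems(1)[of t]] by simp
    have ST: "snd \<in> borel_measurable (N \<Otimes>\<^sub>M (borel :: 'n st3 measure))" by (rule measurable_snd)
    have ff: "case_prod (\<lambda>x. f (fst x)) \<in> borel_measurable ((N \<Otimes>\<^sub>M (borel :: 'n st3 measure)) \<Otimes>\<^sub>M (borel :: 'n st3 measure))"
    proof -
      have "(\<lambda>z. (fst (fst z), snd z)) \<in> measurable ((N \<Otimes>\<^sub>M (borel :: 'n st3 measure)) \<Otimes>\<^sub>M (borel :: 'n st3 measure)) (N \<Otimes>\<^sub>M borel)"
        by measurable
      from measurable_compose[OF this Suc.prems(2)] show ?thesis by (simp add: case_prod_beta')
    qed
    from meas_step[OF X ST ff, of B \<eta> q k] show ?thesis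
      unfolding f'_def by (simp add: case_prod_beta')
  qed
  show ?case unfolding eq by (rule Suc.IH[OF _ f'm]) (use Suc.prems in auto)
qed


context setting
begin
lemma risk_meas_raw[measurable (raw)]:
  "f \<in> borel_measurable M \<Longrightarrow> (\<lambda>x. risk D (f x)) \<in> borel_measurable M"
  by (rule measurable_compose[OF _ risk_meas])
end

lemma E_abs_bound:
  fixes f :: "'a \<Rightarrow> real"
  assumes "finite (set_pmf M)" "\<And>x. x \<in> set_pmf M \<Longrightarrow> \<bar>f x\<bar> \<le> C"
  shows "\<bar>measure_pmf.expectation M f\<bar> \<le> C"
proof -
  have i: "integrable M f" by (rule integrable_measure_pmf_finite[OF assms(1)])
  have "measure_pmf.expectation M f \<le> measure_pmf.expectation M (\<lambda>_. C)"
    by (rule integral_mono_AE[OF i]) (use assms(2) in \<open>auto simp: AE_measure_pmf_iff abs_le_iff\<close>)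
  moreover have "measure_pmf.expectation M (\<lambda>_. - C) \<le> measure_pmf.expectation M f"
  proof (rule integral_mono_AE[OF _ i])
    show "AE x in M. - C \<le> f x" unfolding AE_measure_pmf_iff
    proof
      fix x assume "x \<in> set_pmf M"
      then have "\<bar>f x\<bar> \<le> C" by (rule assms(2))
      then show "- C \<le> f x" by linarith
    qed
  qed simp
  ultimately show ?thesis by (simp add: measure_pmf.prob_space)
qed

locale algo2 = algo D B q k \<eta> ws c for D :: "((real ^ 'n::finite) \<times> real) measure" and B q k \<eta> ws c +
  fixes V :: real
  assumes zq: "\<And>i. pmf q i = 0 \<Longrightarrow> (AE p in D. fst p $ i = 0)"
    and Vb: "\<And>i. (\<integral>p. (fst p $ i)^2 / pmf q i \<partial>D) / real k + (\<integral>p. (fst p $ i)^2 \<partial>D) \<le> V"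
    and c_eq: "c = 12 * \<eta> * B^3 * V"
    and wsB: "l1norm ws \<le> B"
begin

interpretation prob_space D by (rule P)

lemma Psi_alt: "Psi t st = real t * risk D ((1 / real t) *\<^sub>R snd (snd st)) - real t * risk D ws
      + (B / \<eta>) * ln (l1norm (fst st) + l1norm (fst (snd st)))
      - (1 / \<eta>) * (\<Sum>i\<in>UNIV. ws $ i * ln (fst st $ i)) - real t * c"
  by (cases st) (auto simp: Psi_simp)

lemma Psi_meas[measurable]: "Psi t \<in> borel_measurable borel"
  unfolding Psi_alt[abs_def] by measurable

lemma meas_D_borel: "f \<in> measurable N D \<longleftrightarrow> f \<in> measurable N borel"
  for f :: "_ \<Rightarrow> (real ^ 'n) \<times> real"
proof -
  have "measurable N D = measurable N (borel :: ((real ^ 'n) \<times> real) measure)"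
    by (rule measurable_cong_sets[OF refl sets_D])
  then show ?thesis by simp
qed

lemma step_int:
  assumes inv: "Inv B t st"
  shows "(\<integral>p. measure_pmf.expectation (gaelr_step B \<eta> q k p st) (Psi (Suc t)) \<partial>D) \<le> Psi t st"
proof -
  obtain zp zm acc where st: "st = (zp, zm, acc)" by (cases st) auto
  have I: "0 < zp $ i" "zm $ i = 1 / zp $ i" for i using inv by (auto simp: Inv_def st)
  have acc0: "t = 0 \<longrightarrow> acc = 0" using inv by (auto simp: Inv_def st)
  have zmpos: "0 < zm $ i" for i using I[of i] by simp
  define w where "w = weight B zp zm"
  define W where "W = l1norm zp + l1norm zm"
  define pp where "pp i = 2 * B * ((zp $ i + zm $ i) / W) + \<bar>ws $ i\<bar>" for i
  define e where "e i p = (fst p $ i)^2 / pmf q i / real k + (fst p $ i)^2" for i and p :: "(real ^ 'n) \<times> real"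
  define h1 where "h1 p = measure_pmf.expectation (gaelr_step B \<eta> q k p st) (Psi (Suc t))" for p
  define h3 where "h3 p = Psi t st + risk D w - risk D ws - (sq_loss w (fst p) (snd p) - sq_loss ws (fst p) (snd p))
      + \<eta> * (4 * B^2) * (\<Sum>i\<in>UNIV. e i p * pp i) - c" for p
  have Wpos: "W > 0"
  proof -
    have "l1norm zp > 0" using I(1) by (simp add: l1norm_pos_vec sum_pos)
    then show ?thesis unfolding W_def using l1norm_nonneg[of zm] by linarith
  qed
  have ppnn: "0 \<le> pp i" for i unfolding pp_def using I(1)[of i] zmpos[of i] Wpos Bpos
    by (auto intro!: add_nonneg_nonneg)
  have wB: "l1norm w \<le> B" unfolding w_def by (rule l1norm_weight[OF I(1) zmpos]) (use Bpos in auto)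
  have AEz: "AE p in D. \<forall>i. pmf q i = 0 \<longrightarrow> fst p $ i = 0"
    unfolding AE_all_countable by (auto intro: zq)
  have h13: "AE p in D. h1 p \<le> h3 p"
    using bnd AEz
  proof eventually_elim
    fix p :: "(real ^ 'n) \<times> real"
    assume b: "linfnorm (fst p) \<le> 1 \<and> \<bar>snd p\<bar> \<le> B" and z: "\<forall>i. pmf q i = 0 \<longrightarrow> fst p $ i = 0"
    obtain x y where p: "p = (x, y)" by (cases p)
    have b1: "h1 p \<le> Psi t (zp, zm, acc) + risk D w - risk D ws - ((w \<bullet> x - y) *\<^sub>R x) \<bullet> (w - ws)
       + \<eta> * (l1norm w + B)^2 * (\<Sum>i\<in>UNIV. ((x $ i)^2 / pmf q i / real k + (x $ i)^2) * pp i) - c"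
      unfolding h1_def p st w_def pp_def W_def
      by (rule E_step_bound[OF I(1) zmpos acc0]) (use b z p in auto)
    have b2: "((w \<bullet> x - y) *\<^sub>R x) \<bullet> (w - ws) \<ge> sq_loss w x y - sq_loss ws x y"
      by (rule loss_linear)
    have b3: "\<eta> * (l1norm w + B)^2 * (\<Sum>i\<in>UNIV. ((x $ i)^2 / pmf q i / real k + (x $ i)^2) * pp i)
        \<le> \<eta> * (4 * B^2) * (\<Sum>i\<in>UNIV. ((x $ i)^2 / pmf q i / real k + (x $ i)^2) * pp i)"
    proof (intro mult_right_mono mult_left_mono)
      have "(l1norm w + B)^2 \<le> (B + B)^2"
        using wB l1norm_nonneg[of w] by (intro power_mono) auto
      then show "(l1norm w + B)^2 \<le> 4 * B^2" by (simp add: power2_eq_square)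
      show "0 \<le> \<eta>" using eta by simp
      show "0 \<le> (\<Sum>i\<in>UNIV. ((x $ i)^2 / pmf q i / real k + (x $ i)^2) * pp i)"
        by (intro sum_nonneg mult_nonneg_nonneg ppnn add_nonneg_nonneg) auto
    qed
    show "h1 p \<le> h3 p" unfolding h3_def e_def p st using b1 b2 b3 by (simp add: p st)
  qed
  have h1m: "h1 \<in> borel_measurable D"
  proof -
    have "(\<lambda>p. measure_pmf.expectation (gaelr_step B \<eta> q k (id p) ((\<lambda>_. st) p)) ((\<lambda>_. Psi (Suc t)) p)) \<in> borel_measurable D"
    proof (rule meas_step)
      have "measurable D (borel :: ((real ^ 'n) \<times> real) measure) = measurable borel borel"
        by (rule measurable_cong_sets[OF sets_D refl])
      then show "id \<in> borel_measurable D" by simp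
      show "(\<lambda>_. st) \<in> borel_measurable D" by simp
      show "(\<lambda>(x, y). Psi (Suc t) y) \<in> borel_measurable (D \<Otimes>\<^sub>M borel)" by measurable
    qed
    then show ?thesis unfolding h1_def by simp
  qed
  have h1i: "integrable D h1"
  proof (rule integrable_const_bound[where B="Cb (Suc t)"])
    show "AE p in D. norm (h1 p) \<le> Cb (Suc t)"
    proof (rule AE_I2)
      fix p
      have invs: "Inv B (Suc t) x" if "x \<in> set_pmf (gaelr_step B \<eta> q k p st)" for x
        by (rule Inv_step[OF inv[unfolded st] eta]) (use Bpos that st in auto)
      have "\<bar>h1 p\<bar> \<le> Cb (Suc t)"
        unfolding h1_def
        by (rule E_abs_bound[OF finite_step]) (rule Psi_bound[OF invs])
      then show "norm (h1 p) \<le> Cb (Suc t)" by simp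
    qed
  qed (rule h1m)
  have xm: "(\<lambda>p. fst p $ i) \<in> borel_measurable D" for i
    unfolding meas_D_iff borel_prod[symmetric] by measurable
  have ei: "integrable D (e i)" for i
  proof (rule integrable_const_bound[where B="1 / pmf q i / real k + 1"])
    show "e i \<in> borel_measurable D" unfolding e_def using xm[of i] by measurable
    show "AE p in D. norm (e i p) \<le> 1 / pmf q i / real k + 1"
      using bnd
    proof eventually_elim
      fix p :: "(real ^ 'n) \<times> real" assume "linfnorm (fst p) \<le> 1 \<and> \<bar>snd p\<bar> \<le> B"
      then have x1: "\<bar>fst p $ i\<bar> \<le> 1" using abs_le_linfnorm[of "fst p" i] by simp
      then have x2: "(fst p $ i)^2 \<le> 1" by (simp add: abs_square_le_1)
      have "(fst p $ i)^2 / pmf q i / real k \<le> 1 / pmf q i / real k"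
        using x2 by (intro divide_right_mono) auto
      then show "norm (e i p) \<le> 1 / pmf q i / real k + 1" unfolding e_def using x2
        by (simp add: abs_of_nonneg)
    qed
  qed
  have loss_i: "integrable D (\<lambda>p. sq_loss v (fst p) (snd p))" for v by (rule sq_loss_int)
  have h3i: "integrable D h3" unfolding h3_def using ei loss_i by simp
  have "(\<integral>p. h1 p \<partial>D) \<le> (\<integral>p. h3 p \<partial>D)" by (rule integral_mono_AE[OF h1i h3i h13])
  also have "(\<integral>p. h3 p \<partial>D) = Psi t st + \<eta> * (4 * B^2) * (\<Sum>i\<in>UNIV. (\<integral>p. e i p \<partial>D) * pp i) - c"
    unfolding h3_def using ei loss_i
    by (simp add: prob_space risk_def[symmetric] integral_sum integral_mult_left)
  also have "\<dots> \<le> Psi t st + \<eta> * (4 * B^2) * (V * (3 * B)) - c"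
  proof -
    have x2i: "integrable D (\<lambda>p. (fst p $ i)^2)" for i
    proof (rule integrable_const_bound[where B=1])
      show "(\<lambda>p. (fst p $ i)^2) \<in> borel_measurable D" using xm[of i] by measurable
      show "AE p in D. norm ((fst p $ i)^2) \<le> 1" using bnd
      proof eventually_elim
        fix p :: "(real ^ 'n) \<times> real" assume "linfnorm (fst p) \<le> 1 \<and> \<bar>snd p\<bar> \<le> B"
        then have "\<bar>fst p $ i\<bar> \<le> 1" using abs_le_linfnorm[of "fst p" i] by simp
        then show "norm ((fst p $ i)^2) \<le> 1" by (simp add: abs_square_le_1)
      qed
    qed
    have i1: "integrable D (\<lambda>p. (fst p $ i)^2 / pmf q i)" for i
    proof -
      have "integrable D (\<lambda>p. real k * (e i p - (fst p $ i)^2))"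
        using ei[of i] x2i[of i] by simp
      moreover have "real k * (e i p - (fst p $ i)^2) = (fst p $ i)^2 / pmf q i" for p
        unfolding e_def using k1 by simp
      ultimately show ?thesis by simp
    qed
    have eV: "(\<integral>p. e i p \<partial>D) \<le> V" for i
    proof -
      have "(\<integral>p. e i p \<partial>D) = (\<integral>p. (fst p $ i)^2 / pmf q i \<partial>D) / real k + (\<integral>p. (fst p $ i)^2 \<partial>D)"
        unfolding e_def using i1[of i] x2i[of i] by simp
      then show ?thesis using Vb[of i] by simp
    qed
    have V0: "0 \<le> V"
    proof -
      obtain i :: 'n where True by simp
      have "0 \<le> (\<integral>p. (fst p $ i)^2 / pmf q i \<partial>D) / real k + (\<integral>p. (fst p $ i)^2 \<partial>D)"
        by (intro add_nonneg_nonneg divide_nonneg_nonneg integral_nonneg_AE) auto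
      then show ?thesis using Vb[of i] by linarith
    qed
    have "(\<Sum>i\<in>UNIV. (\<integral>p. e i p \<partial>D) * pp i) \<le> (\<Sum>i\<in>UNIV. V * pp i)"
      by (intro sum_mono mult_right_mono eV ppnn)
    also have "(\<Sum>i\<in>UNIV. V * pp i) \<le> V * (3 * B)"
    proof -
      have "(\<Sum>i\<in>UNIV. pp i) = (\<Sum>i\<in>UNIV. (2 * B / W) * (zp $ i + zm $ i)) + l1norm ws"
        unfolding pp_def l1norm_def by (simp add: sum.distrib)
      also have "(\<Sum>i\<in>UNIV. (2 * B / W) * (zp $ i + zm $ i)) = (2 * B / W) * (\<Sum>i\<in>UNIV. zp $ i + zm $ i)"
        by (rule sum_distrib_left[symmetric])
      also have "(\<Sum>i\<in>UNIV. zp $ i + zm $ i) = W"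
        unfolding W_def using I(1) zmpos by (simp add: l1norm_pos_vec sum.distrib)
      finally have "(\<Sum>i\<in>UNIV. pp i) = 2 * B + l1norm ws" using Wpos by simp
      then have "(\<Sum>i\<in>UNIV. pp i) \<le> 3 * B" using wsB by simp
      then show ?thesis using V0 by (simp add: sum_distrib_left[symmetric] mult_left_mono)
    qed
    finally have "(\<Sum>i\<in>UNIV. (\<integral>p. e i p \<partial>D) * pp i) \<le> V * (3 * B)" .
    moreover have "0 \<le> \<eta> * (4 * B^2)" using eta by simp
    ultimately have "\<eta> * (4 * B^2) * (\<Sum>i\<in>UNIV. (\<integral>p. e i p \<partial>D) * pp i) \<le> \<eta> * (4 * B^2) * (V * (3 * B))"
      by (rule mult_left_mono)
    then show ?thesis by linarith
  qed
  also have "\<dots> = Psi t st" unfolding c_eq by (simp add: power2_eq_square power3_eq_cube)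
  finally show ?thesis unfolding h1_def .
qed

end

context algo2
begin

interpretation prob_space D by (rule P)

interpretation PP: product_prob_space "\<lambda>_::nat. D" "UNIV"
  by (simp add: product_prob_space_def product_prob_space_axioms_def product_sigma_finite_def P
      prob_space_imp_sigma_finite)

abbreviation run :: "(nat \<Rightarrow> (real ^ 'n) \<times> real) \<Rightarrow> nat \<Rightarrow> 'n st3 pmf" where
  "run S t \<equiv> gaelr_run B \<eta> q k S t"

lemma Inv_run': "st \<in> set_pmf (run S t) \<Longrightarrow> Inv B t st"
  by (rule Inv_run[OF eta]) (use Bpos in auto)

lemma step_integrable:
  assumes inv: "Inv B t st"
  shows "integrable D (\<lambda>p. measure_pmf.expectation (gaelr_step B \<eta> q k p st) (Psi (Suc t)))"
proof (rule integrable_const_bound[where B="Cb (Suc t)"])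
  show "AE p in D. norm (measure_pmf.expectation (gaelr_step B \<eta> q k p st) (Psi (Suc t))) \<le> Cb (Suc t)"
  proof (rule AE_I2)
    fix p
    obtain zp zm acc where st: "st = (zp, zm, acc)" by (cases st) auto
    have invs: "Inv B (Suc t) x" if "x \<in> set_pmf (gaelr_step B \<eta> q k p st)" for x
      by (rule Inv_step[OF inv[unfolded st] eta]) (use Bpos that st in auto)
    have "\<bar>measure_pmf.expectation (gaelr_step B \<eta> q k p st) (Psi (Suc t))\<bar> \<le> Cb (Suc t)"
      by (rule E_abs_bound[OF finite_step]) (rule Psi_bound[OF invs])
    then show "norm (measure_pmf.expectation (gaelr_step B \<eta> q k p st) (Psi (Suc t))) \<le> Cb (Suc t)" by simp
  qed
  have "(\<lambda>p. measure_pmf.expectation (gaelr_step B \<eta> q k (id p) ((\<lambda>_. st) p)) ((\<lambda>_. Psi (Suc t)) p)) \<in> borel_measurable D"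
  proof (rule meas_step)
    have "measurable D (borel :: ((real ^ 'n) \<times> real) measure) = measurable borel borel"
      by (rule measurable_cong_sets[OF sets_D refl])
    then show "id \<in> borel_measurable D" by simp
    show "(\<lambda>_. st) \<in> borel_measurable D" by simp
    show "(\<lambda>(x, y). Psi (Suc t) y) \<in> borel_measurable (D \<Otimes>\<^sub>M borel)" by measurable
  qed
  then show "(\<lambda>p. measure_pmf.expectation (gaelr_step B \<eta> q k p st) (Psi (Suc t))) \<in> borel_measurable D"
    by simp
qed

lemma comp_meas:
  assumes "s \<in> I"
  shows "(\<lambda>S. S s) \<in> borel_measurable (PiM I (\<lambda>_. D))"
  using measurable_component_singleton[OF assms, of "\<lambda>_. D"] unfolding meas_D_borel .

lemma run_meas:
  assumes "\<And>s. s < t \<Longrightarrow> s \<in> I"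
  shows "(\<lambda>S. measure_pmf.expectation (run S t) (Psi t)) \<in> borel_measurable (PiM I (\<lambda>_. D))"
proof -
  have "(\<lambda>S. measure_pmf.expectation (run (id S) t) ((\<lambda>_. Psi t) S)) \<in> borel_measurable (PiM I (\<lambda>_. D))"
  proof (rule meas_run)
    show "(\<lambda>p. id p s) \<in> borel_measurable (PiM I (\<lambda>_. D))" if "s < t" for s
      using comp_meas[OF assms[OF that]] by simp
    show "(\<lambda>(x, y). Psi t y) \<in> borel_measurable (PiM I (\<lambda>_. D) \<Otimes>\<^sub>M borel)" by measurable
  qed
  then show ?thesis by simp
qed

lemma run_bound: "\<bar>measure_pmf.expectation (run S t) (Psi t)\<bar> \<le> Cb t"
  by (rule E_abs_bound[OF finite_run]) (rule Psi_bound[OF Inv_run'])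

lemma run_int:
  assumes "\<And>s. s < t \<Longrightarrow> s \<in> I"
  shows "integrable (PiM I (\<lambda>_. D)) (\<lambda>S. measure_pmf.expectation (run S t) (Psi t))"
proof -
  interpret PI: prob_space "PiM I (\<lambda>_. D)" by (rule prob_space_PiM) (rule P)
  show ?thesis
    by (rule PI.integrable_const_bound[where B="Cb t"]) (auto simp: run_bound run_meas[OF assms])
qed

end

context algo2
begin

interpretation prob_space D by (rule P)

interpretation PP: product_prob_space "\<lambda>_::nat. D" "UNIV"
  by (simp add: product_prob_space_def product_prob_space_axioms_def product_sigma_finite_def P
      prob_space_imp_sigma_finite)

lemma abs_int_bound:
  fixes f :: "_ \<Rightarrow> real" and C :: real
  assumes "f \<in> borel_measurable D" "\<And>y. \<bar>f y\<bar> \<le> C"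
  shows "\<bar>\<integral>y. f y \<partial>D\<bar> \<le> C"
proof -
  have i: "integrable D f" by (rule integrable_const_bound[where B=C]) (use assms in auto)
  have "\<bar>\<integral>y. f y \<partial>D\<bar> \<le> (\<integral>y. \<bar>f y\<bar> \<partial>D)" by (rule integral_abs_bound[unfolded real_norm_def])
  also have "\<dots> \<le> (\<integral>y. C \<partial>D)" by (intro integral_mono i integrable_abs) (use assms in auto)
  finally show ?thesis by (simp add: prob_space)
qed

lemma G_meas:
  assumes "\<And>s. s < t \<Longrightarrow> s \<in> I"
  shows "(\<lambda>(S, y). measure_pmf.expectation (run S t) (\<lambda>st. measure_pmf.expectation (gaelr_step B \<eta> q k y st) (Psi (Suc t))))
     \<in> borel_measurable (PiM I (\<lambda>_. D) \<Otimes>\<^sub>M D)"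
proof -
  define N where "N = PiM I (\<lambda>_. D) \<Otimes>\<^sub>M D"
  have "(\<lambda>p. measure_pmf.expectation (run (fst p) t) ((\<lambda>p st. measure_pmf.expectation (gaelr_step B \<eta> q k (snd p) st) (Psi (Suc t))) p))
     \<in> borel_measurable N"
  proof (rule meas_run)
    fix s assume "s < t"
    then show "(\<lambda>p. fst p s) \<in> borel_measurable N"
      unfolding N_def using measurable_compose[OF measurable_fst[of "PiM I (\<lambda>_. D)" D] comp_meas[OF assms]] by simp
  next
    have X: "(\<lambda>z. snd (fst z)) \<in> borel_measurable (N \<Otimes>\<^sub>M (borel :: 'n st3 measure))"
    proof -
      have "(\<lambda>z. snd (fst z)) \<in> measurable (N \<Otimes>\<^sub>M (borel :: 'n st3 measure)) D"
        unfolding N_def by measurable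
      then show ?thesis unfolding meas_D_borel .
    qed
    have ST: "snd \<in> borel_measurable (N \<Otimes>\<^sub>M (borel :: 'n st3 measure))" by (rule measurable_snd)
    have ff: "case_prod (\<lambda>_. Psi (Suc t)) \<in> borel_measurable ((N \<Otimes>\<^sub>M (borel :: 'n st3 measure)) \<Otimes>\<^sub>M (borel :: 'n st3 measure))"
      by measurable
    from meas_step[OF X ST ff, of B \<eta> q k]
    show "(\<lambda>(p, st). measure_pmf.expectation (gaelr_step B \<eta> q k (snd p) st) (Psi (Suc t))) \<in> borel_measurable (N \<Otimes>\<^sub>M borel)"
      by (simp add: case_prod_beta')
  qed
  then show ?thesis unfolding N_def by (simp add: case_prod_beta')
qed

lemma inner_bound:
  "(\<integral>y. measure_pmf.expectation (run S t) (\<lambda>st. measure_pmf.expectation (gaelr_step B \<eta> q k y st) (Psi (Suc t))) \<partial>D)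
    \<le> measure_pmf.expectation (run S t) (Psi t)"
proof -
  let ?A = "set_pmf (run S t)"
  have fA: "finite ?A" by (rule finite_run)
  have "(\<integral>y. measure_pmf.expectation (run S t) (\<lambda>st. measure_pmf.expectation (gaelr_step B \<eta> q k y st) (Psi (Suc t))) \<partial>D)
      = (\<integral>y. (\<Sum>st\<in>?A. measure_pmf.expectation (gaelr_step B \<eta> q k y st) (Psi (Suc t)) * pmf (run S t) st) \<partial>D)"
    by (intro Bochner_Integration.integral_cong refl integral_measure_pmf_real fA) auto
  also have "\<dots> = (\<Sum>st\<in>?A. (\<integral>y. measure_pmf.expectation (gaelr_step B \<eta> q k y st) (Psi (Suc t)) * pmf (run S t) st \<partial>D))"
    by (rule Bochner_Integration.integral_sum) (auto intro!: step_integrable Inv_run')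
  also have "\<dots> = (\<Sum>st\<in>?A. (\<integral>y. measure_pmf.expectation (gaelr_step B \<eta> q k y st) (Psi (Suc t)) \<partial>D) * pmf (run S t) st)"
    by (intro sum.cong refl integral_mult_left_zero)
  also have "\<dots> \<le> (\<Sum>st\<in>?A. Psi t st * pmf (run S t) st)"
    by (intro sum_mono mult_right_mono step_int Inv_run') auto
  also have "\<dots> = measure_pmf.expectation (run S t) (Psi t)"
    by (rule integral_measure_pmf_real[symmetric]) (auto simp: fA)
  finally show ?thesis .
qed

end

context algo2
begin

interpretation prob_space D by (rule P)

interpretation PP: product_prob_space "\<lambda>_::nat. D" "UNIV"
  by (simp add: product_prob_space_def product_prob_space_axioms_def product_sigma_finite_def P
      prob_space_imp_sigma_finite)

lemma main_ind:
  assumes "t \<le> m"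
  shows "(\<integral>S. measure_pmf.expectation (run S t) (Psi t) \<partial>PiM {0..<m} (\<lambda>_. D))
           \<le> Psi 0 ((\<chi> i. 1), (\<chi> i. 1), 0)"
  using assms
proof (induction t)
  case 0
  interpret PI: prob_space "PiM {0..<m} (\<lambda>_. D)" by (rule prob_space_PiM) (rule P)
  show ?case by (simp add: PI.prob_space)
next
  case (Suc t)
  then have tm: "t < m" by simp
  define I' where "I' = {0..<m} - {t}"
  have ins: "insert t I' = {0..<m}" using tm unfolding I'_def by auto
  have fin: "finite I'" "t \<notin> I'" unfolding I'_def by auto
  interpret PI': prob_space "PiM I' (\<lambda>_. D)" by (rule prob_space_PiM) (rule P)
  define H where "H y st = measure_pmf.expectation (gaelr_step B \<eta> q k y st) (Psi (Suc t))" for y st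
  define g1 where "g1 S = (\<integral>y. measure_pmf.expectation (run S t) (H y) \<partial>D)" for S
  define g2 where "g2 S = measure_pmf.expectation (run S t) (Psi t)" for S
  have runupd: "run (S(t := y)) t = run S t" for S y by (rule run_prefix) auto
  have E1: "measure_pmf.expectation (run (S(t := y)) (Suc t)) (Psi (Suc t)) = measure_pmf.expectation (run S t) (H y)" for S y
    unfolding E_run_Suc H_def runupd by simp
  have "(\<integral>S. measure_pmf.expectation (run S (Suc t)) (Psi (Suc t)) \<partial>PiM {0..<m} (\<lambda>_. D))
      = (\<integral>S. (\<integral>y. measure_pmf.expectation (run (S(t := y)) (Suc t)) (Psi (Suc t)) \<partial>D) \<partial>PiM I' (\<lambda>_. D))"
    unfolding ins[symmetric]
    by (rule PP.product_integral_insert[OF fin]) (rule run_int, use ins Suc.prems in auto)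
  also have "\<dots> = (\<integral>S. g1 S \<partial>PiM I' (\<lambda>_. D))" unfolding g1_def E1 ..
  also have "\<dots> \<le> (\<integral>S. g2 S \<partial>PiM I' (\<lambda>_. D))"
  proof (rule integral_mono)
    show "integrable (PiM I' (\<lambda>_. D)) g2" unfolding g2_def
      by (rule run_int) (use tm in \<open>auto simp: I'_def\<close>)
    show "g1 S \<le> g2 S" for S unfolding g1_def g2_def H_def by (rule inner_bound)
    show "integrable (PiM I' (\<lambda>_. D)) g1"
    proof (rule PI'.integrable_const_bound[where B="Cb (Suc t)"])
      have "(\<lambda>(S, y). measure_pmf.expectation (run S t) (H y)) \<in> borel_measurable (PiM I' (\<lambda>_. D) \<Otimes>\<^sub>M D)"
        unfolding H_def by (rule G_meas) (use tm in \<open>auto simp: I'_def\<close>)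
      then show "g1 \<in> borel_measurable (PiM I' (\<lambda>_. D))"
        unfolding g1_def by (rule sigma_finite_measure.borel_measurable_lebesgue_integral[OF prob_space_imp_sigma_finite[OF P]])
      show "AE S in PiM I' (\<lambda>_. D). norm (g1 S) \<le> Cb (Suc t)"
      proof (rule AE_I2)
        fix S assume S: "S \<in> space (PiM I' (\<lambda>_. D))"
        have m: "(\<lambda>y. measure_pmf.expectation (run S t) (H y)) \<in> borel_measurable D"
        proof -
          have "(\<lambda>(S, y). measure_pmf.expectation (run S t) (H y)) \<in> borel_measurable (PiM I' (\<lambda>_. D) \<Otimes>\<^sub>M D)"
            unfolding H_def by (rule G_meas) (use tm in \<open>auto simp: I'_def\<close>)
          then have "(\<lambda>y. (\<lambda>(S, y). measure_pmf.expectation (run S t) (H y)) (S, y)) \<in> borel_measurable D"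
            by (rule measurable_Pair2[OF _ S])
          then show ?thesis by simp
        qed
        have "\<bar>g1 S\<bar> \<le> Cb (Suc t)" unfolding g1_def
        proof (rule abs_int_bound[OF m])
          fix y show "\<bar>measure_pmf.expectation (run S t) (H y)\<bar> \<le> Cb (Suc t)"
            using run_bound[of "S(t := y)" "Suc t"] unfolding E1 .
        qed
        then show "norm (g1 S) \<le> Cb (Suc t)" by simp
      qed
    qed
  qed
  also have "(\<integral>S. g2 S \<partial>PiM I' (\<lambda>_. D)) = (\<integral>S. (\<integral>y. g2 (S(t := y)) \<partial>D) \<partial>PiM I' (\<lambda>_. D))"
    unfolding g2_def runupd by (simp add: prob_space)
  also have "\<dots> = (\<integral>S. g2 S \<partial>PiM {0..<m} (\<lambda>_. D))"
    unfolding ins[symmetric]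
    by (rule PP.product_integral_insert[OF fin, symmetric]) (unfold g2_def, rule run_int, use ins tm in auto)
  also have "\<dots> \<le> Psi 0 ((\<chi> i. 1), (\<chi> i. 1), 0)" unfolding g2_def using Suc by simp
  finally show ?case .
qed

end

context algo2
begin

interpretation prob_space D by (rule P)

lemma Psi0: "Psi 0 ((\<chi> i. 1), (\<chi> i. 1), 0) = (B / \<eta>) * ln (2 * real CARD('n))"
  by (simp add: Psi_simp l1norm_def)

lemma Psi_lower:
  assumes "Inv B t st"
  shows "real t * risk D ((1 / real t) *\<^sub>R snd (snd st)) \<le> Psi t st + real t * risk D ws + real t * c"
proof -
  obtain zp zm acc where st: "st = (zp, zm, acc)" by (cases st) auto
  have I: "0 < zp $ i" "zm $ i = 1 / zp $ i" for i using assms by (auto simp: Inv_def st)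
  have zmpos: "0 < zm $ i" for i using I[of i] by simp
  define W where "W = l1norm zp + l1norm zm"
  have W: "W = (\<Sum>i\<in>UNIV. zp $ i + zm $ i)"
    unfolding W_def using I(1) zmpos by (simp add: l1norm_pos_vec sum.distrib)
  have geW: "zp $ i + zm $ i \<le> W" for i
    unfolding W by (rule member_le_sum) (auto intro: add_nonneg_nonneg less_imp_le I(1) zmpos)
  have lnb: "\<bar>ln (zp $ i)\<bar> \<le> ln W" for i
  proof -
    have "zp $ i \<le> W" using geW[of i] zmpos[of i] by linarith
    then have a: "ln (zp $ i) \<le> ln W" using I(1)[of i] by simp
    have "1 / zp $ i \<le> W" using geW[of i] I(1)[of i] I(2)[of i] by linarith
    moreover have "0 < W" using geW[of i] I(1)[of i] zmpos[of i] by linarith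
    ultimately have "ln (1 / zp $ i) \<le> ln W" using I(1)[of i] ln_le_cancel_iff[of "1 / zp $ i" W] by simp
    then have b: "- ln (zp $ i) \<le> ln W" using I(1)[of i] by (simp add: ln_div)
    show ?thesis using a b by linarith
  qed
  have lnW0: "0 \<le> ln W" using lnb[of undefined] by linarith
  have "(\<Sum>i\<in>UNIV. ws $ i * ln (zp $ i)) \<le> (\<Sum>i\<in>UNIV. \<bar>ws $ i\<bar> * ln W)"
  proof (rule sum_mono)
    fix i
    have "ws $ i * ln (zp $ i) \<le> \<bar>ws $ i\<bar> * \<bar>ln (zp $ i)\<bar>" by (metis abs_ge_self abs_mult)
    also have "\<dots> \<le> \<bar>ws $ i\<bar> * ln W" by (intro mult_left_mono lnb) auto
    finally show "ws $ i * ln (zp $ i) \<le> \<bar>ws $ i\<bar> * ln W" .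
  qed
  also have "\<dots> = l1norm ws * ln W" by (simp add: l1norm_def sum_distrib_right)
  also have "\<dots> \<le> B * ln W" using wsB lnW0 by (intro mult_right_mono) auto
  finally have "(\<Sum>i\<in>UNIV. ws $ i * ln (zp $ i)) \<le> B * ln W" .
  then have "(1 / \<eta>) * (\<Sum>i\<in>UNIV. ws $ i * ln (zp $ i)) \<le> (B / \<eta>) * ln W"
    using eta by (simp add: divide_right_mono)
  then show ?thesis unfolding st Psi_simp W_def[symmetric] by simp
qed

lemma out_meas:
  "(\<lambda>S. measure_pmf.expectation (run S m) (\<lambda>st. risk D ((1 / real m) *\<^sub>R snd (snd st))))
     \<in> borel_measurable (PiM {0..<m} (\<lambda>_. D))"
proof -
  have "(\<lambda>S. measure_pmf.expectation (run (id S) m) ((\<lambda>_ st. risk D ((1 / real m) *\<^sub>R snd (snd st))) S))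
     \<in> borel_measurable (PiM {0..<m} (\<lambda>_. D))"
  proof (rule meas_run)
    show "(\<lambda>p. id p s) \<in> borel_measurable (PiM {0..<m} (\<lambda>_. D))" if "s < m" for s
      using comp_meas[of s "{0..<m}"] that by simp
    show "(\<lambda>(x, y). risk D ((1 / real m) *\<^sub>R snd (snd y))) \<in> borel_measurable (PiM {0..<m} (\<lambda>_. D) \<Otimes>\<^sub>M borel)"
      by measurable
  qed
  then show ?thesis by simp
qed

lemma final_bound:
  assumes m: "m \<ge> 1"
  shows "(\<integral>S. measure_pmf.expectation (run S m) (\<lambda>st. risk D ((1 / real m) *\<^sub>R snd (snd st))) \<partial>PiM {0..<m} (\<lambda>_. D))
     \<le> risk D ws + c + (B / \<eta>) * ln (2 * real CARD('n)) / real m"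
proof -
  interpret PI: prob_space "PiM {0..<m} (\<lambda>_. D)" by (rule prob_space_PiM) (rule P)
  let ?P = "PiM {0..<m} (\<lambda>_. D)"
  define g where "g S = measure_pmf.expectation (run S m) (\<lambda>st. risk D ((1 / real m) *\<^sub>R snd (snd st)))" for S
  define g2 where "g2 S = measure_pmf.expectation (run S m) (Psi m)" for S
  have mpos: "real m > 0" using m by simp
  have g2i: "integrable ?P g2" unfolding g2_def by (rule run_int) auto
  have gle: "g S \<le> g2 S / real m + risk D ws + c" for S
  proof -
    have "g S \<le> measure_pmf.expectation (run S m) (\<lambda>st. Psi m st / real m + risk D ws + c)"
      unfolding g_def
    proof (rule integral_mono_AE)
      show "integrable (run S m) (\<lambda>st. risk D ((1 / real m) *\<^sub>R snd (snd st)))"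
        by (rule integrable_measure_pmf_finite[OF finite_run])
      show "integrable (run S m) (\<lambda>st. Psi m st / real m + risk D ws + c)"
        by (rule integrable_measure_pmf_finite[OF finite_run])
      show "AE st in run S m. risk D ((1 / real m) *\<^sub>R snd (snd st)) \<le> Psi m st / real m + risk D ws + c"
        unfolding AE_measure_pmf_iff
      proof
        fix st assume "st \<in> set_pmf (run S m)"
        from Psi_lower[OF Inv_run'[OF this]]
        have "real m * risk D ((1 / real m) *\<^sub>R snd (snd st)) \<le> Psi m st + real m * risk D ws + real m * c" .
        then show "risk D ((1 / real m) *\<^sub>R snd (snd st)) \<le> Psi m st / real m + risk D ws + c"
          using mpos by (simp add: field_simps)
      qed
    qed
    also have "\<dots> = g2 S / real m + risk D ws + c"
      unfolding g2_def
      by (simp add: integrable_measure_pmf_finite[OF finite_run] measure_pmf.prob_space)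
    finally show ?thesis .
  qed
  have gi: "integrable ?P g"
  proof (rule PI.integrable_const_bound[where B="2 * B^2"])
    show "g \<in> borel_measurable ?P" unfolding g_def by (rule out_meas)
    show "AE S in ?P. norm (g S) \<le> 2 * B^2"
    proof (rule AE_I2)
      fix S
      have "\<bar>g S\<bar> \<le> 2 * B^2" unfolding g_def
      proof (rule E_abs_bound[OF finite_run])
        fix st assume "st \<in> set_pmf (run S m)"
        then have inv: "Inv B m st" by (rule Inv_run')
        obtain zp zm acc where st: "st = (zp, zm, acc)" by (cases st) auto
        have "l1norm acc \<le> real m * B" using inv by (simp add: Inv_def st)
        then have "l1norm ((1 / real m) *\<^sub>R acc) \<le> B" using mpos by (simp add: l1norm_scale field_simps)
        then have "(l1norm ((1 / real m) *\<^sub>R acc) + B)^2 \<le> (B + B)^2"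
          using l1norm_nonneg[of "(1 / real m) *\<^sub>R acc"] Bpos by (intro power_mono) auto
        then have "risk D ((1 / real m) *\<^sub>R acc) \<le> 2 * B^2"
          using risk_le[of "(1 / real m) *\<^sub>R acc"] by (simp add: power2_eq_square)
        then show "\<bar>risk D ((1 / real m) *\<^sub>R snd (snd st))\<bar> \<le> 2 * B^2"
          using risk_nonneg by (simp add: st)
      qed
      then show "norm (g S) \<le> 2 * B^2" by simp
    qed
  qed
  have "(\<integral>S. g S \<partial>?P) \<le> (\<integral>S. g2 S / real m + risk D ws + c \<partial>?P)"
    by (rule integral_mono[OF gi _ gle]) (use g2i in simp)
  also have "\<dots> = (\<integral>S. g2 S \<partial>?P) / real m + risk D ws + c"
    using g2i by (simp add: PI.prob_space)
  also have "(\<integral>S. g2 S \<partial>?P) \<le> (B / \<eta>) * ln (2 * real CARD('n))"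
    unfolding g2_def using main_ind[of m] Psi0 by simp
  finally have "(\<integral>S. g S \<partial>?P) \<le> (B / \<eta>) * ln (2 * real CARD('n)) / real m + risk D ws + c"
    using mpos by (simp add: divide_right_mono)
  then show ?thesis unfolding g_def by simp
qed

end

context setting
begin

interpretation prob_space D by (rule P)

lemma xi_meas: "(\<lambda>p. fst p $ i) \<in> borel_measurable D"
  unfolding meas_D_iff borel_prod[symmetric] by measurable

lemma x2_int: "integrable D (\<lambda>p. (fst p $ i)^2)"
proof (rule integrable_const_bound[where B=1])
  show "(\<lambda>p. (fst p $ i)^2) \<in> borel_measurable D" using xi_meas[of i] by measurable
  show "AE p in D. norm ((fst p $ i)^2) \<le> 1" using bnd
  proof eventually_elim
    fix p :: "(real ^ 'n) \<times> real" assume "linfnorm (fst p) \<le> 1 \<and> \<bar>snd p\<bar> \<le> B"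
    then have "\<bar>fst p $ i\<bar> \<le> 1" using abs_le_linfnorm[of "fst p" i] by simp
    then show "norm ((fst p $ i)^2) \<le> 1" by (simp add: abs_square_le_1)
  qed
qed

lemma sm_nonneg: "0 \<le> second_moments D $ i"
  unfolding second_moments_def by (simp add: integral_nonneg_AE)

lemma sm_le1: "second_moments D $ i \<le> 1"
proof -
  have "(\<integral>p. (fst p $ i)^2 \<partial>D) \<le> (\<integral>p. 1 \<partial>D)"
  proof (rule integral_mono_AE[OF x2_int])
    show "AE p in D. (fst p $ i)^2 \<le> 1" using bnd
    proof eventually_elim
      fix p :: "(real ^ 'n) \<times> real" assume "linfnorm (fst p) \<le> 1 \<and> \<bar>snd p\<bar> \<le> B"
      then have "\<bar>fst p $ i\<bar> \<le> 1" using abs_le_linfnorm[of "fst p" i] by simp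
      then show "(fst p $ i)^2 \<le> 1" by (simp add: abs_square_le_1)
    qed
  qed simp
  then show ?thesis unfolding second_moments_def by (simp add: prob_space)
qed

lemma sm_zero:
  assumes "second_moments D $ i = 0"
  shows "AE p in D. fst p $ i = 0"
proof -
  have "(\<integral>p. (fst p $ i)^2 \<partial>D) = 0" using assms unfolding second_moments_def by simp
  then have "AE p in D. (fst p $ i)^2 = 0"
    using integral_nonneg_eq_0_iff_AE[OF x2_int[of i]] by simp
  then show ?thesis by simp
qed

lemma l1_sm: "l1norm (second_moments D) = (\<Sum>i\<in>UNIV. second_moments D $ i)"
  unfolding l1norm_def using sm_nonneg by simp

lemma pmf_q:
  assumes "l1norm (second_moments D) > 0"
  shows "pmf (ddaelr_q D) i = second_moments D $ i / l1norm (second_moments D)"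
  unfolding ddaelr_q_def
proof (rule pmf_embed_finite)
  show "0 \<le> second_moments D $ x / l1norm (second_moments D)" for x
    using sm_nonneg assms by simp
  show "(\<Sum>x\<in>UNIV. second_moments D $ x / l1norm (second_moments D)) = 1"
    using assms by (simp add: sum_divide_distrib[symmetric] l1_sm[symmetric])
qed

lemma q_zero:
  assumes "pmf (ddaelr_q D) i = 0"
  shows "AE p in D. fst p $ i = 0"
proof (cases "second_moments D $ i = 0")
  case True then show ?thesis by (rule sm_zero)
next
  case False
  then have pos: "second_moments D $ i > 0" using sm_nonneg[of i] by simp
  have "second_moments D $ i \<le> l1norm (second_moments D)"
    unfolding l1_sm by (rule member_le_sum) (auto simp: sm_nonneg)
  then have S: "l1norm (second_moments D) > 0" using pos by simp
  then have "pmf (ddaelr_q D) i > 0" using pos by (simp add: pmf_q)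
  then show ?thesis using assms by simp
qed

lemma q_V:
  assumes "k \<ge> 1"
  shows "(\<integral>p. (fst p $ i)^2 / pmf (ddaelr_q D) i \<partial>D) / real k + (\<integral>p. (fst p $ i)^2 \<partial>D)
     \<le> l1norm (second_moments D) / real k + 1"
proof -
  have a: "(\<integral>p. (fst p $ i)^2 / pmf (ddaelr_q D) i \<partial>D) \<le> l1norm (second_moments D)"
  proof (cases "second_moments D $ i = 0")
    case True
    have mm: "(\<lambda>p. (fst p $ i)^2 / pmf (ddaelr_q D) i) \<in> borel_measurable D"
      using xi_meas[of i] by measurable
    have "(\<integral>p. (fst p $ i)^2 / pmf (ddaelr_q D) i \<partial>D) = (\<integral>p. 0 \<partial>D)"
      by (rule integral_cong_AE[OF mm]) (use sm_zero[OF True] in \<open>auto intro: AE_mp\<close>)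
    also have "\<dots> = 0" by simp
    finally have h: "(\<integral>p. (fst p $ i)^2 / pmf (ddaelr_q D) i \<partial>D) = 0" .
    show ?thesis using h l1norm_nonneg[of "second_moments D"] by linarith
  next
    case False
    then have pos: "second_moments D $ i > 0" using sm_nonneg[of i] by simp
    have "second_moments D $ i \<le> l1norm (second_moments D)"
      unfolding l1_sm by (rule member_le_sum) (auto simp: sm_nonneg)
    then have S: "l1norm (second_moments D) > 0" using pos by simp
    have "(\<integral>p. (fst p $ i)^2 / pmf (ddaelr_q D) i \<partial>D) = (\<integral>p. (fst p $ i)^2 \<partial>D) / pmf (ddaelr_q D) i"
      by simp
    also have "\<dots> = l1norm (second_moments D)"
      using pos S by (simp add: pmf_q second_moments_def)
    finally show ?thesis by simp
  qed
  have b: "(\<integral>p. (fst p $ i)^2 \<partial>D) \<le> 1" using sm_le1[of i] by (simp add: second_moments_def)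
  have "(\<integral>p. (fst p $ i)^2 / pmf (ddaelr_q D) i \<partial>D) / real k \<le> l1norm (second_moments D) / real k"
    using a by (rule divide_right_mono) simp
  then show ?thesis using b by linarith
qed

end

lemma arith_final:
  fixes B Lg m V :: real
  assumes B: "B > 0" and L: "Lg > 0" and m: "m > 0" and V: "V \<ge> 1"
    and eta: "\<eta> = 1 / (2 * B) * sqrt (Lg / (5 * m * V))"
  shows "12 * \<eta> * B^3 * V + (B / \<eta>) * Lg / m \<le> 4 * B^2 * sqrt (5 * Lg * V / m)"
proof -
  define r where "r = sqrt (Lg / (5 * m * V))"
  have rpos: "r > 0" unfolding r_def using L m V by simp
  have r2: "r^2 = Lg / (5 * m * V)" unfolding r_def using L m V by simp
  have Lgm: "Lg / m = 5 * V * r^2" unfolding r2 using m V by (simp add: field_simps)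
  have e: "\<eta> = r / (2 * B)" unfolding eta r_def by simp
  have s: "sqrt (5 * Lg * V / m) = 5 * V * r"
  proof -
    have "5 * Lg * V / m = (5 * V * r)^2" using Lgm m by (simp add: field_simps power2_eq_square)
    then show ?thesis using rpos V by simp
  qed
  have t1: "12 * \<eta> * B^3 * V = 6 * B^2 * V * r" unfolding e using B by (simp add: field_simps power2_eq_square power3_eq_cube)
  have t2: "(B / \<eta>) * Lg / m = 10 * B^2 * V * r"
  proof -
    have "(B / \<eta>) * Lg / m = (B / \<eta>) * (Lg / m)" by simp
    also have "\<dots> = 2 * B^2 / r * (5 * V * r^2)" unfolding Lgm e using B rpos by (simp add: field_simps power2_eq_square)
    also have "\<dots> = 10 * B^2 * V * r" using rpos by (simp add: field_simps power2_eq_square)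
    finally show ?thesis .
  qed
  have "0 \<le> B^2 * V * r" using rpos V by simp
  moreover have "4 * B^2 * (5 * V * r) = 20 * (B^2 * V * r)" by (simp add: algebra_simps)
  moreover have "6 * B^2 * V * r + 10 * B^2 * V * r = 16 * (B^2 * V * r)" by (simp add: algebra_simps)
  ultimately show ?thesis unfolding t1 t2 s by linarith
qed

theorem theorem6:
  fixes D :: "((real ^ 'n::finite) \<times> real) measure"
    and B \<eta> :: real and k m :: nat and wstar :: "real ^ 'n"
  assumes "prob_space D"
    and "sets D = sets borel"
    and "AE p in D. linfnorm (fst p) \<le> 1 \<and> \<bar>snd p\<bar> \<le> B"
    and "B > 0"
    and "k \<ge> 1"
    and "\<eta> = 1 / (2 * B) * sqrt (ln (2 * real CARD('n)) /
             (5 * real m * (l1norm (second_moments D) / real k + 1)))"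
    and "real m \<ge> ln (2 * real CARD('n))"
    and "l1norm wstar \<le> B"
  shows "(\<integral>S. measure_pmf.expectation (DDAELR D B \<eta> k m S) (risk D)
            \<partial>(PiM {0..<m} (\<lambda>_. D)))
         \<le> risk D wstar + 4 * B^2 * sqrt (5 * ln (2 * real CARD('n)) *
              (l1norm (second_moments D) / real k + 1) / real m)"
proof -
  interpret setting D B by (rule setting.intro) (rule assms)+
  define V where "V = l1norm (second_moments D) / real k + 1"
  define Lg where "Lg = ln (2 * real CARD('n))"
  have card1: "1 \<le> real CARD('n)" by simp
  have "1 < 2 * real CARD('n)" using card1 by linarith
  then have Lpos: "Lg > 0" unfolding Lg_def by simp
  have mpos: "real m > 0" using assms(7) Lpos unfolding Lg_def by linarith
  have V1: "V \<ge> 1" unfolding V_def using l1norm_nonneg[of "second_moments D"] by simp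
  have eta_eq: "\<eta> = 1 / (2 * B) * sqrt (Lg / (5 * real m * V))" using assms(6) unfolding V_def Lg_def by simp
  have eta: "\<eta> > 0" unfolding eta_eq using assms(4) Lpos mpos V1 by simp
  interpret algo2 D B "ddaelr_q D" k \<eta> wstar "12 * \<eta> * B^3 * V" V
  proof unfold_locales
    show "1 \<le> k" by (rule assms(5))
    show "0 < \<eta>" by (rule eta)
    show "AE p in D. fst p $ i = 0" if "pmf (ddaelr_q D) i = 0" for i by (rule q_zero[OF that])
    show "(\<integral>p. (fst p $ i)^2 / pmf (ddaelr_q D) i \<partial>D) / real k + (\<integral>p. (fst p $ i)^2 \<partial>D) \<le> V" for i
      unfolding V_def by (rule q_V[OF assms(5)])
    show "12 * \<eta> * B^3 * V = 12 * \<eta> * B^3 * V" ..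
    show "l1norm wstar \<le> B" by (rule assms(8))
  qed
  have m1: "m \<ge> 1" using mpos by simp
  have lhs: "(\<integral>S. measure_pmf.expectation (DDAELR D B \<eta> k m S) (risk D) \<partial>(PiM {0..<m} (\<lambda>_. D)))
      = (\<integral>S. measure_pmf.expectation (run S m) (\<lambda>st. risk D ((1 / real m) *\<^sub>R snd (snd st))) \<partial>PiM {0..<m} (\<lambda>_. D))"
    unfolding DDAELR_def GAELR_def by (simp add: case_prod_beta')
  have A: "(\<integral>S. measure_pmf.expectation (DDAELR D B \<eta> k m S) (risk D) \<partial>(PiM {0..<m} (\<lambda>_. D)))
      \<le> risk D wstar + 12 * \<eta> * B^3 * V + (B / \<eta>) * Lg / real m"
    unfolding lhs Lg_def using final_bound[OF m1] by simp
  have Bd: "12 * \<eta> * B^3 * V + (B / \<eta>) * Lg / real m \<le> 4 * B^2 * sqrt (5 * Lg * V / real m)"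
    by (rule arith_final[OF assms(4) Lpos mpos V1 eta_eq])
  have final: "(\<integral>S. measure_pmf.expectation (DDAELR D B \<eta> k m S) (risk D) \<partial>(PiM {0..<m} (\<lambda>_. D)))
      \<le> risk D wstar + 4 * B^2 * sqrt (5 * Lg * V / real m)" using A Bd by linarith
  show ?thesis using final unfolding V_def Lg_def .
qed


end
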